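(* Let $\mathcal{X}=\mathbb{R}^2/\mathbb{Z}^2$, $\mathcal{H}=L^2(\mathcal{X})$, let $\psi\in C^\infty(\mathcal{X})$ and let $\varphi(x)=\psi(\cdot-x)$. Let $Z=(z_1,\dots,z_N)\in\mathcal{X}^N$ consist of pairwise distinct points, let $S_Z$ be the least interpolant space for first-order Hermite interpolation at $Z$, and let $L$ be the smallest integer such that every polynomial in $S_Z$ has degree at most $L$. Suppose that $\hat\psi(\alpha)\neq0$ for all $\alpha\in\mathbb{N}_0^2$ with $|\alpha|\le L$. Then $\{h(\partial)\varphi(0):h\in S_Z\}$ spans a subspace of dimension $3N$. Furthermore $L\le 2N-1$.
   Context: $\hat\psi(\alpha)=\int_{\mathcal{X}}\psi(x)e^{-2\pi i\langle\alpha,x\rangle}dx$. For a polynomial $P=\sum_k a_kX^k$, $P(\partial)=\sum_k a_k\partial_1^{k_1}\partial_2^{k_2}$. Least interpolant space: for a linear functional $F$ on polynomials in two variables, $g_F(x)=\sum_{\alpha}\frac{F(X^\alpha)}{\alpha!}x^\alpha$; the least term $g_\downarrow$ of a nonzero power series is its nonzero homogeneous component of lowest degree. For the functionals $P\mapsto P(z_i)$, $P\mapsto\partial_1P(z_i)$, $P\mapsto\partial_2P(z_i)$ ($i=1,\dots,N$), i.e. $e^{\langle z_i,x\rangle}$, $x_1e^{\langle z_i,x\rangle}$, $x_2e^{\langle z_i,x\rangle}$, $S_Z$ is the span of the least terms of all nonzero elements of the span of these $3N$ power series. *)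

theory Defs
  imports "HOL-Analysis.Analysis" "HOL-Library.Function_Algebras"
begin

definition pd1 :: "(real \<times> real \<Rightarrow> complex) \<Rightarrow> real \<times> real \<Rightarrow> complex" where
  "pd1 f x = vector_derivative (\<lambda>t. f (t, snd x)) (at (fst x))"

definition pd2 :: "(real \<times> real \<Rightarrow> complex) \<Rightarrow> real \<times> real \<Rightarrow> complex" where
  "pd2 f x = vector_derivative (\<lambda>t. f (fst x, t)) (at (snd x))"

definition pdiff :: "nat \<times> nat \<Rightarrow> (real \<times> real \<Rightarrow> complex) \<Rightarrow> real \<times> real \<Rightarrow> complex" where
  "pdiff a f = (pd1 ^^ fst a) ((pd2 ^^ snd a) f)"

fun iter_pd :: "bool list \<Rightarrow> (real \<times> real \<Rightarrow> complex) \<Rightarrow> real \<times> real \<Rightarrow> complex" where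
  "iter_pd [] f = f"
| "iter_pd (d # ds) f = (if d then pd1 else pd2) (iter_pd ds f)"

definition smooth2 :: "(real \<times> real \<Rightarrow> complex) \<Rightarrow> bool" where
  "smooth2 f \<longleftrightarrow> (\<forall>ds. iter_pd ds f differentiable_on UNIV)"

text \<open>functions on the torus R^2/Z^2 = Z^2-periodic functions on R^2\<close>
definition periodic2 :: "(real \<times> real \<Rightarrow> complex) \<Rightarrow> bool" where
  "periodic2 f \<longleftrightarrow> (\<forall>x k1 k2. f (x + (real_of_int k1, real_of_int k2)) = f x)"

definition fourier2 :: "(real \<times> real \<Rightarrow> complex) \<Rightarrow> nat \<times> nat \<Rightarrow> complex" where
  "fourier2 f a = integral (cbox (0,0) (1,1))
     (\<lambda>x. f x * exp (- 2 * of_real pi * \<i> *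
            of_real (real (fst a) * fst x + real (snd a) * snd x)))"

type_synonym coeffs2 = "nat \<times> nat \<Rightarrow> complex"

definition cscale :: "complex \<Rightarrow> ('a \<Rightarrow> complex) \<Rightarrow> 'a \<Rightarrow> complex" where
  "cscale c f = (\<lambda>x. c * f x)"

definition monom2 :: "nat \<times> nat \<Rightarrow> coeffs2" where
  "monom2 a = (\<lambda>b. if b = a then 1 else 0)"

definition poly2_eval :: "coeffs2 \<Rightarrow> real \<times> real \<Rightarrow> complex" where
  "poly2_eval p x = (\<Sum>b\<in>{b. p b \<noteq> 0}. p b * of_real (fst x) ^ fst b * of_real (snd x) ^ snd b)"

definition deg2 :: "coeffs2 \<Rightarrow> nat" where
  "deg2 p = Max ({fst b + snd b | b. p b \<noteq> 0} \<union> {0})"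

definition diff_op :: "coeffs2 \<Rightarrow> (real \<times> real \<Rightarrow> complex) \<Rightarrow> real \<times> real \<Rightarrow> complex" where
  "diff_op h f x = (\<Sum>a\<in>{a. h a \<noteq> 0}. h a * pdiff a f x)"

definition gF :: "(coeffs2 \<Rightarrow> complex) \<Rightarrow> coeffs2" where
  "gF F = (\<lambda>a. F (monom2 a) / of_nat (fact (fst a) * fact (snd a)))"

definition least_term :: "coeffs2 \<Rightarrow> coeffs2" where
  "least_term g = (\<lambda>a. if fst a + snd a = (LEAST d. \<exists>b. fst b + snd b = d \<and> g b \<noteq> 0)
                        then g a else 0)"

definition hermite_series_span :: "(nat \<Rightarrow> real \<times> real) \<Rightarrow> nat \<Rightarrow> coeffs2 set" where
  "hermite_series_span z N = {g. \<exists>u v w. g = (\<lambda>a. \<Sum>i<N.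
       u i * gF (\<lambda>p. poly2_eval p (z i)) a
     + v i * gF (\<lambda>p. pd1 (poly2_eval p) (z i)) a
     + w i * gF (\<lambda>p. pd2 (poly2_eval p) (z i)) a)}"

definition least_space :: "(nat \<Rightarrow> real \<times> real) \<Rightarrow> nat \<Rightarrow> coeffs2 set" where
  "least_space z N = module.span cscale
     {least_term g | g. g \<in> hermite_series_span z N \<and> g \<noteq> 0}"

definition least_deg_bound :: "(nat \<Rightarrow> real \<times> real) \<Rightarrow> nat \<Rightarrow> nat" where
  "least_deg_bound z N = (LEAST L. \<forall>h\<in>least_space z N. deg2 h \<le> L)"

end

theory Submission
  imports Defs "HOL-Computational_Algebra.Polynomial"
begin

context vector_space begin

lemma dim_direct_sum:
  assumes A: "subspace A" and B: "subspace B" and AB: "A \<inter> B \<subseteq> {0}"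
    and FA: "A \<subseteq> span FA" "finite FA" and FB: "B \<subseteq> span FB" "finite FB"
  shows "dim (A \<union> B) = dim A + dim B"
proof -
  obtain BA where BA: "BA \<subseteq> A" "independent BA" "A \<subseteq> span BA" "card BA = dim A"
    using basis_exists by blast
  obtain BB where BB: "BB \<subseteq> B" "independent BB" "B \<subseteq> span BB" "card BB = dim B"
    using basis_exists by blast
  have fA: "finite BA"
    using independent_span_bound[OF FA(2) BA(2)] BA(1) FA(1) by blast
  have fB: "finite BB"
    using independent_span_bound[OF FB(2) BB(2)] BB(1) FB(1) by blast
  have disj: "BA \<inter> BB = {}"
  proof (rule ccontr)
    assume "BA \<inter> BB \<noteq> {}"
    then obtain x where "x \<in> BA" "x \<in> BB" by blast
    then have "x = 0" using BA(1) BB(1) AB by blast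
    then show False using \<open>x \<in> BA\<close> BA(2) dependent_zero by blast
  qed
  have spA: "span BA \<subseteq> A" using BA(1) A by (simp add: span_minimal)
  have spB: "span BB \<subseteq> B" using BB(1) B by (simp add: span_minimal)
  have ind: "independent (BA \<union> BB)"
  proof
    assume "dependent (BA \<union> BB)"
    then obtain a where a: "a \<in> BA \<union> BB" "a \<in> span ((BA \<union> BB) - {a})"
      unfolding dependent_def by blast
    show False
    proof (cases "a \<in> BA")
      case True
      then have "a \<notin> BB" using disj by blast
      then have eq: "(BA \<union> BB) - {a} = (BA - {a}) \<union> BB" by blast
      from a(2) obtain x y where xy: "a = x + y" "x \<in> span (BA - {a})" "y \<in> span BB"
        unfolding eq span_Un by blast
      have "x \<in> span BA" using xy(2) span_mono[of "BA - {a}" BA] by blast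
      then have "a - x \<in> A" using True spA span_base[of a BA] span_diff by blast
      moreover have "y \<in> B" using xy(3) spB by blast
      moreover have "a - x = y" using xy(1) by simp
      ultimately have "y = 0" using AB by blast
      then have "a \<in> span (BA - {a})" using xy by simp
      then show False using BA(2) True unfolding dependent_def by blast
    next
      case False
      then have aB: "a \<in> BB" using a(1) by blast
      then have eq: "(BA \<union> BB) - {a} = BA \<union> (BB - {a})" using False by blast
      from a(2) obtain x y where xy: "a = x + y" "x \<in> span BA" "y \<in> span (BB - {a})"
        unfolding eq span_Un by blast
      have "y \<in> span BB" using xy(3) span_mono[of "BB - {a}" BB] by blast
      then have "a - y \<in> B" using aB spB span_base[of a BB] span_diff by blast
      moreover have "x \<in> A" using xy(2) spA by blast
      moreover have "a - y = x" using xy(1) by simp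
      ultimately have "x = 0" using AB by blast
      then have "a \<in> span (BB - {a})" using xy by simp
      then show False using BB(2) aB unfolding dependent_def by blast
    qed
  qed
  have s1: "BA \<union> BB \<subseteq> span (A \<union> B)" using BA(1) BB(1) span_superset[of "A \<union> B"] by blast
  have s2: "span BA \<subseteq> span (BA \<union> BB)" "span BB \<subseteq> span (BA \<union> BB)" by (rule span_mono, blast)+
  have s3: "A \<union> B \<subseteq> span (BA \<union> BB)" using BA(3) BB(3) s2 by blast
  have "span (BA \<union> BB) = span (A \<union> B)" unfolding span_eq using s1 s3 by (rule conjI)
  then have "dim (A \<union> B) = card (BA \<union> BB)"
    using dim_eq_card[OF _ ind] by simp
  also have "\<dots> = dim A + dim B" using card_Un_disjoint[OF fA fB disj] BA BB by simp
  finally show ?thesis .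
qed

lemma independent_from_image:
  assumes f: "module_hom scale scale f" and ind: "independent (f ` C)" and inj: "inj_on f C"
  shows "independent C"
proof
  interpret m: module_hom scale scale f by fact
  assume "dependent C"
  then obtain a where a: "a \<in> C" "a \<in> span (C - {a})" unfolding dependent_def by blast
  then have "f a \<in> span (f ` (C - {a}))" using m.span_image by blast
  moreover have "f ` (C - {a}) = f ` C - {f a}" using inj a(1) by (auto simp: inj_on_def)
  ultimately have "f a \<in> span (f ` C - {f a})" by simp
  then have "dependent (f ` C)" unfolding dependent_def using a(1) by blast
  then show False using ind by simp
qed

lemma dim_kernel_image:
  assumes f: "module_hom scale scale f" and W: "subspace W" and F: "W \<subseteq> span F" "finite F"
  shows "dim W = dim (W \<inter> {x. f x = 0}) + dim (f ` W)"
proof -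
  interpret m: module_hom scale scale f by fact
  obtain D where D: "D \<subseteq> f ` W" "independent D" "f ` W \<subseteq> span D" "card D = dim (f ` W)"
    using basis_exists by blast
  have "f ` W \<subseteq> f ` span F" using F(1) by (rule image_mono)
  then have "f ` W \<subseteq> span (f ` F)" by (simp add: m.span_image)
  then have fD: "finite D" using independent_span_bound[OF finite_imageI[OF F(2)] D(2)] D(1) by blast
  define g where "g = inv_into W f"
  have g: "\<And>d. d \<in> D \<Longrightarrow> g d \<in> W \<and> f (g d) = d"
    using D(1) unfolding g_def by (auto simp: inv_into_into f_inv_into_f)
  define C where "C = g ` D"
  have g1: "\<And>d. d \<in> D \<Longrightarrow> g d \<in> W" and g2: "\<And>d. d \<in> D \<Longrightarrow> f (g d) = d" using g by auto
  have CW: "C \<subseteq> W" unfolding C_def using g1 by auto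
  have "(\<lambda>d. f (g d)) ` D = (\<lambda>d. d) ` D" by (rule image_cong) (auto simp: g2)
  then have fC: "f ` C = D" unfolding C_def image_image by simp
  have injg: "inj_on g D"
  proof (rule inj_onI)
    fix x y assume xy: "x \<in> D" "y \<in> D" "g x = g y"
    then have "f (g x) = f (g y)" by simp
    then show "x = y" using g2[OF xy(1)] g2[OF xy(2)] by simp
  qed
  have injC: "inj_on f C"
  proof (rule inj_onI)
    fix x y assume xy: "x \<in> C" "y \<in> C" "f x = f y"
    then obtain dx dy where d: "dx \<in> D" "dy \<in> D" "x = g dx" "y = g dy" unfolding C_def by auto
    then have "dx = dy" using xy(3) g2 by metis
    then show "x = y" using d by simp
  qed
  have finC: "finite C" using fD C_def by simp
  have indC: "independent C" using independent_from_image[OF f _ injC] D(2) unfolding fC by blast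
  have injspan: "inj_on f (span C)" using m.inj_on_span_independent_image[of C] D(2) injC unfolding fC by blast
  have cardC: "card C = dim (f ` W)" unfolding C_def using card_image[OF injg] D(4) by simp
  define K where "K = W \<inter> {x. f x = 0}"
  have Ksub: "subspace K" unfolding K_def using W m.subspace_kernel subspace_inter by blast
  have spC: "span C \<subseteq> W" using CW W span_minimal by blast
  have int: "span C \<inter> K \<subseteq> {0}"
  proof
    fix x assume "x \<in> span C \<inter> K"
    then have "x \<in> span C" "f x = 0" unfolding K_def by auto
    then have "x = 0" using inj_onD[OF injspan, of x 0] span_zero[of C] by simp
    then show "x \<in> {0}" by simp
  qed
  have "W \<subseteq> span (span C \<union> K)"
  proof
    fix w assume w: "w \<in> W"
    then have "f w \<in> span D" using D(3) by blast
    then have "f w \<in> f ` span C" using m.span_image fC by metis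
    then obtain c where c0: "c \<in> span C" "f w = f c" by (rule imageE)
    then have c: "c \<in> span C" "f c = f w" by auto
    have "w - c \<in> K" unfolding K_def using c w spC W subspace_diff m.diff by auto
    then have "c + (w - c) \<in> span (span C \<union> K)"
      using c(1) by (intro span_add) (auto intro: span_base)
    then show "w \<in> span (span C \<union> K)" by simp
  qed
  moreover have "span C \<union> K \<subseteq> W" using spC K_def by blast
  ultimately have "span (span C \<union> K) = span W"
    unfolding span_eq using span_superset[of W] by blast
  then have "dim W = dim (span C \<union> K)" by (metis span_eq_dim)
  also have "\<dots> = dim (span C) + dim K"
    apply (rule dim_direct_sum[OF subspace_span Ksub int _ finC, of F])
    using K_def F by auto
  also have "dim (span C) = dim (f ` W)" using dim_span_eq_card_independent[OF indC] cardC by simp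
  finally show ?thesis unfolding K_def by simp
qed

end

lemma (in vector_space_pair) dim_image_eq_gen:
  assumes lf: "Vector_Spaces.linear s1 s2 f"
    and fi: "inj_on f (vs1.span S)"
  shows "vs2.dim (f ` S) = vs1.dim S"
proof -
  interpret lf: Vector_Spaces.linear s1 s2 f by fact
  obtain B where B: "B \<subseteq> S" "vs1.independent B" "S \<subseteq> vs1.span B" "card B = vs1.dim S"
    using vs1.basis_exists[of S] by auto
  then have "vs1.span S = vs1.span B"
    using vs1.span_mono[of B S] vs1.span_mono[of S "vs1.span B"] vs1.span_span[of B] by auto
  moreover have "card (f ` B) = card B"
    using assms card_image[of f B] inj_on_subset[of f "vs1.span S" B] B vs1.span_superset by auto
  moreover have "(f ` B) \<subseteq> (f ` S)"
    using B by auto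
  ultimately show ?thesis
    by (metis B(2) B(4) fi lf.dependent_inj_imageD lf.span_image vs2.dim_eq_card_independent vs2.dim_span)
qed

interpretation cs: vector_space "cscale :: complex \<Rightarrow> ('a \<Rightarrow> complex) \<Rightarrow> _"
  by unfold_locales (auto simp: cscale_def algebra_simps fun_eq_iff)

definition ordg :: "coeffs2 \<Rightarrow> nat" where
  "ordg g = (LEAST d. \<exists>b. fst b + snd b = d \<and> g b \<noteq> 0)"

definition Qd :: "nat \<Rightarrow> coeffs2 set" where
  "Qd d = {g. \<forall>a. fst a + snd a < d \<longrightarrow> g a = 0}"

definition Hd :: "nat \<Rightarrow> coeffs2 set" where
  "Hd d = {g. \<forall>a. fst a + snd a \<noteq> d \<longrightarrow> g a = 0}"

definition Pd :: "nat \<Rightarrow> coeffs2 set" where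
  "Pd d = {g. \<forall>a. d < fst a + snd a \<longrightarrow> g a = 0}"

definition proj :: "nat \<Rightarrow> coeffs2 \<Rightarrow> coeffs2" where
  "proj d g = (\<lambda>a. if fst a + snd a = d then g a else 0)"

definition Td :: "nat \<Rightarrow> (nat \<times> nat) set" where
  "Td d = {a. fst a + snd a \<le> d}"

definition LTS :: "coeffs2 set \<Rightarrow> coeffs2 set" where
  "LTS W = {least_term g | g. g \<in> W \<and> g \<noteq> 0}"

lemma sum_fun_apply: "(\<Sum>i\<in>A. (f i :: 'a \<Rightarrow> 'b::comm_monoid_add)) x = (\<Sum>i\<in>A. f i x)"
  by (induction A rule: infinite_finite_induct) auto

lemma finite_Td: "finite (Td d)"
proof -
  have "Td d \<subseteq> {0..d} \<times> {0..d}" unfolding Td_def by auto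
  then show ?thesis by (rule finite_subset) simp
qed

lemma cs_subspaceI:
  assumes "(0::'a \<Rightarrow> complex) \<in> S" "\<And>x y. x \<in> S \<Longrightarrow> y \<in> S \<Longrightarrow> x + y \<in> S"
    "\<And>c x. x \<in> S \<Longrightarrow> cscale c x \<in> S"
  shows "cs.subspace S"
  using assms unfolding cs.subspace_def by auto

lemma subspace_Qd: "cs.subspace (Qd d)"
  by (rule cs_subspaceI) (auto simp: Qd_def cscale_def)

lemma subspace_Hd: "cs.subspace (Hd d)"
  by (rule cs_subspaceI) (auto simp: Hd_def cscale_def)

lemma subspace_Pd: "cs.subspace (Pd d)"
  by (rule cs_subspaceI) (auto simp: Pd_def cscale_def)

lemma proj_hom: "module_hom cscale cscale (proj d)"
  unfolding module_hom_iff
  by (auto simp: proj_def cscale_def fun_eq_iff cs.module_axioms)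

lemma ordg_ex:
  assumes "g \<noteq> 0"
  shows "\<exists>b. fst b + snd b = ordg g \<and> g b \<noteq> 0"
proof -
  from assms obtain b where "g b \<noteq> 0" by (auto simp: fun_eq_iff)
  then have "\<exists>d b. fst b + snd b = d \<and> g b \<noteq> 0" by blast
  from LeastI_ex[OF this] show ?thesis unfolding ordg_def .
qed

lemma ordg_le: "g b \<noteq> 0 \<Longrightarrow> ordg g \<le> fst b + snd b"
  unfolding ordg_def by (rule Least_le) blast

lemma least_term_alt: "least_term g = proj (ordg g) g"
  unfolding least_term_def proj_def ordg_def by simp

lemma Pd_span: "Pd K \<subseteq> cs.span (monom2 ` Td K)"
proof
  fix g assume g: "g \<in> Pd K"
  have "g = (\<Sum>a\<in>Td K. cscale (g a) (monom2 a))"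
  proof
    fix b
    have "(\<Sum>a\<in>Td K. cscale (g a) (monom2 a)) b = (\<Sum>a\<in>Td K. g a * monom2 a b)"
      by (simp add: cscale_def sum_fun_apply)
    also have "\<dots> = (if b \<in> Td K then g b else 0)"
      by (simp add: monom2_def finite_Td if_distrib sum.delta cong: if_cong)
    also have "\<dots> = g b" using g unfolding Pd_def Td_def by (cases b) auto
    finally show "g b = (\<Sum>a\<in>Td K. cscale (g a) (monom2 a)) b" by simp
  qed
  also have "\<dots> \<in> cs.span (monom2 ` Td K)"
    by (intro cs.span_sum cs.span_scale cs.span_base) auto
  finally show "g \<in> cs.span (monom2 ` Td K)" .
qed


lemma ordg_ge: "g \<in> Qd d \<Longrightarrow> g \<noteq> 0 \<Longrightarrow> d \<le> ordg g"
proof -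
  assume g: "g \<in> Qd d" "g \<noteq> 0"
  obtain b where b: "fst b + snd b = ordg g" "g b \<noteq> 0" using ordg_ex[OF g(2)] by blast
  show ?thesis
  proof (rule ccontr)
    assume "\<not> d \<le> ordg g"
    then have "fst b + snd b < d" using b(1) by simp
    then have "g b = 0" using g(1) unfolding Qd_def by blast
    then show False using b(2) by simp
  qed
qed

lemma ordg_eq: "g \<in> Qd d \<Longrightarrow> proj d g \<noteq> 0 \<Longrightarrow> ordg g = d"
proof -
  assume g: "g \<in> Qd d" "proj d g \<noteq> 0"
  then obtain b where b: "proj d g b \<noteq> 0" by (auto simp: fun_eq_iff)
  then have "fst b + snd b = d" "g b \<noteq> 0" unfolding proj_def by (auto split: if_splits)
  then have "ordg g \<le> d" using ordg_le[of g b] by simp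
  moreover have "g \<noteq> 0" using \<open>g b \<noteq> 0\<close> by auto
  then have "d \<le> ordg g" using ordg_ge g(1) by blast
  ultimately show ?thesis by simp
qed

lemma Qd_Suc: "g \<in> Qd d \<Longrightarrow> proj d g = 0 \<Longrightarrow> g \<in> Qd (Suc d)"
proof -
  assume g: "g \<in> Qd d" "proj d g = 0"
  have "g a = 0" if a: "fst a + snd a < Suc d" for a
  proof (cases "fst a + snd a = d")
    case True
    have "proj d g a = 0" using g(2) by simp
    then show ?thesis using True unfolding proj_def by simp
  next
    case False
    then have "fst a + snd a < d" using a by simp
    then show ?thesis using g(1) unfolding Qd_def by (cases a) simp
  qed
  then show ?thesis unfolding Qd_def by blast
qed

lemma Qd_Suc_iff: "g \<in> Qd d \<Longrightarrow> g \<in> Qd (Suc d) \<longleftrightarrow> proj d g = 0"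
  using Qd_Suc[of g d] unfolding Qd_def proj_def fun_eq_iff by auto

lemma Qd_mono: "e \<le> d \<Longrightarrow> Qd d \<subseteq> Qd e"
  unfolding Qd_def by auto

lemma proj_Hd: "proj d g \<in> Hd d"
  unfolding proj_def Hd_def by auto

lemma least_term_Qd: "least_term g \<in> Qd (ordg g)"
  unfolding least_term_alt proj_def Qd_def by auto

lemma Hd_Qd: "Hd d \<inter> Qd (Suc d) \<subseteq> {0}"
proof
  fix g assume g: "g \<in> Hd d \<inter> Qd (Suc d)"
  have "g a = 0" for a
  proof (cases "fst a + snd a = d")
    case True then have "fst a + snd a < Suc d" by simp
    then show ?thesis using g unfolding Qd_def by (cases a) simp
  next
    case False then show ?thesis using g unfolding Hd_def by (cases a) simp
  qed
  then have "g = 0" by (simp add: fun_eq_iff)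
  then show "g \<in> {0}" by simp
qed

lemma Hd_Pd: "d \<le> K \<Longrightarrow> Hd d \<subseteq> Pd K"
  unfolding Hd_def Pd_def by auto

lemma ordg_K: "w \<noteq> 0 \<Longrightarrow> w \<notin> Qd (Suc K) \<Longrightarrow> ordg w \<le> K"
proof -
  assume "w \<notin> Qd (Suc K)"
  then obtain a where "fst a + snd a < Suc K" "w a \<noteq> 0" unfolding Qd_def by auto
  then show ?thesis using ordg_le[of w a] by simp
qed

lemma LTS_Pd:
  assumes "\<forall>w\<in>W. w \<in> Qd (Suc K) \<longrightarrow> w = 0"
  shows "LTS W \<subseteq> Pd K"
proof
  fix x assume "x \<in> LTS W"
  then obtain w where w: "x = least_term w" "w \<in> W" "w \<noteq> 0" unfolding LTS_def by auto
  then have "ordg w \<le> K" using assms ordg_K by blast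
  have "x \<in> Hd (ordg w)" using w(1) least_term_alt proj_Hd by simp
  then show "x \<in> Pd K" using Hd_Pd[OF \<open>ordg w \<le> K\<close>] by blast
qed

lemma LT_main:
  fixes K :: nat and G :: "coeffs2 set"
  assumes G: "finite G"
  shows "n = Suc K - d \<Longrightarrow> cs.subspace W \<Longrightarrow> W \<subseteq> cs.span G \<Longrightarrow> \<forall>w\<in>W. w \<in> Qd (Suc K) \<longrightarrow> w = 0
     \<Longrightarrow> W \<subseteq> Qd d \<Longrightarrow> d \<le> Suc K \<Longrightarrow> cs.dim (LTS W) = cs.dim W"
proof (induction n arbitrary: W d)
  case 0
  then have d: "d = Suc K" by simp
  have "\<forall>x\<in>W. x = 0" using 0 d by blast
  then have W0: "W \<subseteq> cs.span {}" by auto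
  have "LTS W = {}" using W0 unfolding LTS_def by auto
  then have "cs.dim (LTS W) = 0" using cs.dim_le_card[of "LTS W" "{}"] by simp
  moreover have "cs.dim W = 0" using cs.dim_le_card[OF W0] by simp
  ultimately show ?case by simp
next
  case (Suc n)
  have dK: "d \<le> K" using Suc.prems(1) by simp
  define W' where "W' = W \<inter> Qd (Suc d)"
  define A where "A = proj d ` W"
  have W'eq: "W' = W \<inter> {x. proj d x = 0}"
    unfolding W'_def using Suc.prems(5) Qd_Suc_iff by blast
  have subW': "cs.subspace W'" unfolding W'_def using Suc.prems(2) subspace_Qd cs.subspace_inter by blast
  have IH: "cs.dim (LTS W') = cs.dim W'"
    apply (rule Suc.IH[of "Suc d"])
    using Suc.prems subW' unfolding W'_def by auto
  have dimW: "cs.dim W = cs.dim W' + cs.dim A"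
    unfolding W'eq A_def by (rule cs.dim_kernel_image[OF proj_hom Suc.prems(2,3) G])
  have subA: "cs.subspace A"
    unfolding A_def using module_hom.subspace_image[OF proj_hom Suc.prems(2)] .
  have AH: "A \<subseteq> Hd d" unfolding A_def using proj_Hd by blast
  have LTW'Q: "LTS W' \<subseteq> Qd (Suc d)"
  proof
    fix x assume "x \<in> LTS W'"
    then obtain w where w: "x = least_term w" "w \<in> W'" "w \<noteq> 0" unfolding LTS_def by auto
    then have "Suc d \<le> ordg w" using ordg_ge W'_def by blast
    then show "x \<in> Qd (Suc d)" using w(1) least_term_Qd Qd_mono by blast
  qed
  have spLQ: "cs.span (LTS W') \<subseteq> Qd (Suc d)" using LTW'Q subspace_Qd cs.span_minimal by blast
  have int: "A \<inter> cs.span (LTS W') \<subseteq> {0}" using AH spLQ Hd_Qd by blast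
  have LTW'P: "LTS W' \<subseteq> Pd K" apply (rule LTS_Pd) using Suc.prems(4) W'_def by blast
  have spLP: "cs.span (LTS W') \<subseteq> cs.span (monom2 ` Td K)"
    using LTW'P Pd_span subspace_Pd cs.span_minimal cs.span_mono by (meson order_trans)
  have AP: "A \<subseteq> cs.span (monom2 ` Td K)" using AH Hd_Pd[OF dK] Pd_span by blast
  have claim: "cs.span (LTS W) = cs.span (A \<union> cs.span (LTS W'))"
    unfolding cs.span_eq
  proof
    show "LTS W \<subseteq> cs.span (A \<union> cs.span (LTS W'))"
    proof
      fix x assume "x \<in> LTS W"
      then obtain w where w: "x = least_term w" "w \<in> W" "w \<noteq> 0" unfolding LTS_def by auto
      show "x \<in> cs.span (A \<union> cs.span (LTS W'))"
      proof (cases "proj d w = 0")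
        case True
        then have "w \<in> W'" using W'eq w(2) by blast
        then have "x \<in> LTS W'" using w unfolding LTS_def by auto
        then show ?thesis by (intro cs.span_base) (auto intro: cs.span_base)
      next
        case False
        then have "ordg w = d" using ordg_eq Suc.prems(5) w(2) by blast
        then have "x = proj d w" using w(1) least_term_alt by simp
        then have "x \<in> A" unfolding A_def using w(2) by blast
        then show ?thesis by (intro cs.span_base) auto
      qed
    qed
  next
    have "A \<subseteq> cs.span (LTS W)"
    proof
      fix x assume "x \<in> A"
      then obtain w where w: "x = proj d w" "w \<in> W" unfolding A_def by auto
      show "x \<in> cs.span (LTS W)"
      proof (cases "proj d w = 0")
        case True then show ?thesis using w cs.span_zero by simp
      next
        case False
        then have "ordg w = d" using ordg_eq Suc.prems(5) w(2) by blast
        then have "x = least_term w" using w(1) least_term_alt by simp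
        moreover have "w \<noteq> 0"
        proof
          assume "w = 0"
          then have "proj d w = 0" by (simp add: proj_def fun_eq_iff)
          then show False using False by simp
        qed
        ultimately have "x \<in> LTS W" using w(2) unfolding LTS_def by auto
        then show ?thesis by (rule cs.span_base)
      qed
    qed
    moreover have "cs.span (LTS W') \<subseteq> cs.span (LTS W)"
      by (rule cs.span_mono) (auto simp: LTS_def W'_def)
    ultimately show "A \<union> cs.span (LTS W') \<subseteq> cs.span (LTS W)" by blast
  qed
  have "cs.dim (LTS W) = cs.dim (A \<union> cs.span (LTS W'))"
    using cs.span_eq_dim[OF claim] .
  also have "\<dots> = cs.dim A + cs.dim (cs.span (LTS W'))"
    by (rule cs.dim_direct_sum[OF subA cs.subspace_span int AP _ spLP]) (simp_all add: finite_Td)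
  also have "\<dots> = cs.dim W" using IH dimW by simp
  finally show ?case .
qed

inductive PR :: "nat \<Rightarrow> (real \<times> real \<Rightarrow> real) \<Rightarrow> bool" where
  const: "PR d (\<lambda>x. c)"
| mx: "PR d P \<Longrightarrow> PR (Suc d) (\<lambda>x. fst x * P x)"
| my: "PR d P \<Longrightarrow> PR (Suc d) (\<lambda>x. snd x * P x)"
| add: "PR d P \<Longrightarrow> PR d Q \<Longrightarrow> PR d (\<lambda>x. P x + Q x)"
| smul: "PR d P \<Longrightarrow> PR d (\<lambda>x. c * P x)"
| up: "PR d P \<Longrightarrow> PR (Suc d) P"

definition D1ok :: "(real \<times> real \<Rightarrow> real) \<Rightarrow> bool" where
  "D1ok R \<longleftrightarrow> (\<forall>t y. \<exists>D. ((\<lambda>s. R (s, y)) has_real_derivative D) (at t))"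

definition D2ok :: "(real \<times> real \<Rightarrow> real) \<Rightarrow> bool" where
  "D2ok R \<longleftrightarrow> (\<forall>t y. \<exists>D. ((\<lambda>s. R (y, s)) has_real_derivative D) (at t))"

lemma D1ok_deriv: "D1ok R \<Longrightarrow> ((\<lambda>s. R (s, y)) has_real_derivative deriv (\<lambda>s. R (s, y)) t) (at t)"
  unfolding D1ok_def using DERIV_deriv_iff_has_field_derivative by blast

lemma D2ok_deriv: "D2ok R \<Longrightarrow> ((\<lambda>s. R (y, s)) has_real_derivative deriv (\<lambda>s. R (y, s)) t) (at t)"
  unfolding D2ok_def using DERIV_deriv_iff_has_field_derivative by blast

lemma pd1_of_real:
  assumes "D1ok R"
  shows "pd1 (\<lambda>x. complex_of_real (R x)) x = of_real (deriv (\<lambda>s. R (s, snd x)) (fst x))"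
  unfolding pd1_def
  by (rule vector_derivative_at, rule has_vector_derivative_of_real, rule D1ok_deriv[OF assms])

lemma pd2_of_real:
  assumes "D2ok R"
  shows "pd2 (\<lambda>x. complex_of_real (R x)) x = of_real (deriv (\<lambda>s. R (fst x, s)) (snd x))"
  unfolding pd2_def
  by (rule vector_derivative_at, rule has_vector_derivative_of_real, rule D2ok_deriv[OF assms])

lemma PR_ok: "PR d P \<Longrightarrow> D1ok P \<and> D2ok P"
proof (induction rule: PR.induct)
  case (const d c)
  then show ?case unfolding D1ok_def D2ok_def by (auto intro: DERIV_const)
next
  case (mx d P)
  have "D1ok (\<lambda>x. fst x * P x)" unfolding D1ok_def
  proof (intro allI)
    fix t y
    obtain D where "((\<lambda>s. P (s, y)) has_real_derivative D) (at t)" using mx.IH unfolding D1ok_def by blast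
    then have "((\<lambda>s. s * P (s, y)) has_real_derivative (1 * P (t, y) + D * t)) (at t)"
      by (rule DERIV_mult[OF DERIV_ident])
    then show "\<exists>D. ((\<lambda>s. fst (s, y) * P (s, y)) has_real_derivative D) (at t)" by auto
  qed
  moreover have "D2ok (\<lambda>x. fst x * P x)" unfolding D2ok_def
  proof (intro allI)
    fix t y
    obtain D where "((\<lambda>s. P (y, s)) has_real_derivative D) (at t)" using mx.IH unfolding D2ok_def by blast
    then have "((\<lambda>s. y * P (y, s)) has_real_derivative (y * D)) (at t)"
      by (rule DERIV_cmult)
    then show "\<exists>D. ((\<lambda>s. fst (y, s) * P (y, s)) has_real_derivative D) (at t)" by auto
  qed
  ultimately show ?case by blast
next
  case (my d P)
  have "D2ok (\<lambda>x. snd x * P x)" unfolding D2ok_def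
  proof (intro allI)
    fix t y
    obtain D where "((\<lambda>s. P (y, s)) has_real_derivative D) (at t)" using my.IH unfolding D2ok_def by blast
    then have "((\<lambda>s. s * P (y, s)) has_real_derivative (1 * P (y, t) + D * t)) (at t)"
      by (rule DERIV_mult[OF DERIV_ident])
    then show "\<exists>D. ((\<lambda>s. snd (y, s) * P (y, s)) has_real_derivative D) (at t)" by auto
  qed
  moreover have "D1ok (\<lambda>x. snd x * P x)" unfolding D1ok_def
  proof (intro allI)
    fix t y
    obtain D where "((\<lambda>s. P (s, y)) has_real_derivative D) (at t)" using my.IH unfolding D1ok_def by blast
    then have "((\<lambda>s. y * P (s, y)) has_real_derivative (y * D)) (at t)"
      by (rule DERIV_cmult)
    then show "\<exists>D. ((\<lambda>s. snd (s, y) * P (s, y)) has_real_derivative D) (at t)" by auto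
  qed
  ultimately show ?case by blast
next
  case (add d P Q)
  have "D1ok (\<lambda>x. P x + Q x)" unfolding D1ok_def
  proof (intro allI)
    fix t y
    obtain A where A: "((\<lambda>s. P (s, y)) has_real_derivative A) (at t)" using add.IH unfolding D1ok_def by blast
    obtain B where B: "((\<lambda>s. Q (s, y)) has_real_derivative B) (at t)" using add.IH unfolding D1ok_def by blast
    show "\<exists>D. ((\<lambda>s. P (s, y) + Q (s, y)) has_real_derivative D) (at t)" using DERIV_add[OF A B] by blast
  qed
  moreover have "D2ok (\<lambda>x. P x + Q x)" unfolding D2ok_def
  proof (intro allI)
    fix t y
    obtain A where A: "((\<lambda>s. P (y, s)) has_real_derivative A) (at t)" using add.IH unfolding D2ok_def by blast
    obtain B where B: "((\<lambda>s. Q (y, s)) has_real_derivative B) (at t)" using add.IH unfolding D2ok_def by blast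
    show "\<exists>D. ((\<lambda>s. P (y, s) + Q (y, s)) has_real_derivative D) (at t)" using DERIV_add[OF A B] by blast
  qed
  ultimately show ?case by blast
next
  case (smul d P c)
  have "D1ok (\<lambda>x. c * P x)" unfolding D1ok_def
  proof (intro allI)
    fix t y
    obtain A where A: "((\<lambda>s. P (s, y)) has_real_derivative A) (at t)" using smul.IH unfolding D1ok_def by blast
    show "\<exists>D. ((\<lambda>s. c * P (s, y)) has_real_derivative D) (at t)" using DERIV_cmult[OF A] by blast
  qed
  moreover have "D2ok (\<lambda>x. c * P x)" unfolding D2ok_def
  proof (intro allI)
    fix t y
    obtain A where A: "((\<lambda>s. P (y, s)) has_real_derivative A) (at t)" using smul.IH unfolding D2ok_def by blast
    show "\<exists>D. ((\<lambda>s. c * P (y, s)) has_real_derivative D) (at t)" using DERIV_cmult[OF A] by blast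
  qed
  ultimately show ?case by blast
next
  case (up d P)
  then show ?case by simp
qed


definition monoR :: "nat \<times> nat \<Rightarrow> real \<times> real \<Rightarrow> real" where
  "monoR a x = fst x ^ fst a * snd x ^ snd a"

lemma monoR_ok: "D1ok (monoR a) \<and> D2ok (monoR a)"
proof -
  have "D1ok (monoR a)" unfolding D1ok_def monoR_def
  proof (intro allI)
    fix t y
    have "((\<lambda>s. s ^ fst a * y ^ snd a) has_real_derivative (real (fst a) * t ^ (fst a - Suc 0) * y ^ snd a)) (at t)"
      by (rule DERIV_cmult_right[OF DERIV_pow])
    then show "\<exists>D. ((\<lambda>s. fst (s, y) ^ fst a * snd (s, y) ^ snd a) has_real_derivative D) (at t)" by auto
  qed
  moreover have "D2ok (monoR a)" unfolding D2ok_def monoR_def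
  proof (intro allI)
    fix t y
    have "((\<lambda>s. y ^ fst a * s ^ snd a) has_real_derivative (y ^ fst a * (real (snd a) * t ^ (snd a - Suc 0)))) (at t)"
      by (rule DERIV_cmult[OF DERIV_pow])
    then show "\<exists>D. ((\<lambda>s. fst (y, s) ^ fst a * snd (y, s) ^ snd a) has_real_derivative D) (at t)" by auto
  qed
  ultimately show ?thesis ..
qed

context
  fixes z :: "nat \<Rightarrow> real \<times> real" and N :: nat
begin

definition Lam :: "(nat \<Rightarrow> complex) \<Rightarrow> (nat \<Rightarrow> complex) \<Rightarrow> (nat \<Rightarrow> complex) \<Rightarrow> (real \<times> real \<Rightarrow> complex) \<Rightarrow> complex" where
  "Lam u v w F = (\<Sum>i<N. u i * F (z i) + v i * pd1 F (z i) + w i * pd2 F (z i))"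

definition LamR where "LamR u v w R = Lam u v w (\<lambda>x. complex_of_real (R x))"

lemma LamR_alt:
  assumes "D1ok R" "D2ok R"
  shows "LamR u v w R = (\<Sum>i<N. u i * of_real (R (z i)) + v i * of_real (deriv (\<lambda>s. R (s, snd (z i))) (fst (z i)))
           + w i * of_real (deriv (\<lambda>s. R (fst (z i), s)) (snd (z i))))"
  unfolding LamR_def Lam_def using pd1_of_real[OF assms(1)] pd2_of_real[OF assms(2)] by simp

lemma LamR_add:
  assumes "D1ok P" "D2ok P" "D1ok Q" "D2ok Q"
  shows "LamR u v w (\<lambda>x. P x + Q x) = LamR u v w P + LamR u v w Q"
proof -
  have d1: "D1ok (\<lambda>x. P x + Q x)" unfolding D1ok_def
    using DERIV_add[OF D1ok_deriv[OF assms(1)] D1ok_deriv[OF assms(3)]] by blast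
  have d2: "D2ok (\<lambda>x. P x + Q x)" unfolding D2ok_def
    using DERIV_add[OF D2ok_deriv[OF assms(2)] D2ok_deriv[OF assms(4)]] by blast
  have e1: "deriv (\<lambda>s. P (s, y) + Q (s, y)) t = deriv (\<lambda>s. P (s, y)) t + deriv (\<lambda>s. Q (s, y)) t" for y t
    by (rule DERIV_imp_deriv, rule DERIV_add[OF D1ok_deriv[OF assms(1)] D1ok_deriv[OF assms(3)]])
  have e2: "deriv (\<lambda>s. P (y, s) + Q (y, s)) t = deriv (\<lambda>s. P (y, s)) t + deriv (\<lambda>s. Q (y, s)) t" for y t
    by (rule DERIV_imp_deriv, rule DERIV_add[OF D2ok_deriv[OF assms(2)] D2ok_deriv[OF assms(4)]])
  show ?thesis
    unfolding LamR_alt[OF d1 d2] LamR_alt[OF assms(1,2)] LamR_alt[OF assms(3,4)] e1 e2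
    by (simp add: sum.distrib[symmetric] algebra_simps)
qed

lemma LamR_smul:
  assumes "D1ok P" "D2ok P"
  shows "LamR u v w (\<lambda>x. c * P x) = of_real c * LamR u v w P"
proof -
  have d1: "D1ok (\<lambda>x. c * P x)" unfolding D1ok_def
    using DERIV_cmult[OF D1ok_deriv[OF assms(1)]] by blast
  have d2: "D2ok (\<lambda>x. c * P x)" unfolding D2ok_def
    using DERIV_cmult[OF D2ok_deriv[OF assms(2)]] by blast
  have e1: "deriv (\<lambda>s. c * P (s, y)) t = c * deriv (\<lambda>s. P (s, y)) t" for y t
    by (rule DERIV_imp_deriv, rule DERIV_cmult[OF D1ok_deriv[OF assms(1)]])
  have e2: "deriv (\<lambda>s. c * P (y, s)) t = c * deriv (\<lambda>s. P (y, s)) t" for y t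
    by (rule DERIV_imp_deriv, rule DERIV_cmult[OF D2ok_deriv[OF assms(2)]])
  show ?thesis
    unfolding LamR_alt[OF d1 d2] LamR_alt[OF assms(1,2)] e1 e2
    by (simp add: sum_distrib_left algebra_simps)
qed

lemma ok_mx: "D1ok P \<Longrightarrow> D2ok P \<Longrightarrow> D1ok (\<lambda>x. fst x * P x) \<and> D2ok (\<lambda>x. fst x * P x)"
  unfolding D1ok_def D2ok_def
  using DERIV_mult[OF DERIV_ident] DERIV_cmult by fastforce

lemma ok_my: "D1ok P \<Longrightarrow> D2ok P \<Longrightarrow> D1ok (\<lambda>x. snd x * P x) \<and> D2ok (\<lambda>x. snd x * P x)"
  unfolding D1ok_def D2ok_def
  using DERIV_mult[OF DERIV_ident] DERIV_cmult by fastforce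

lemma LamR_mx:
  assumes "D1ok P" "D2ok P"
  shows "LamR u v w (\<lambda>x. fst x * P x) =
    LamR (\<lambda>i. u i * of_real (fst (z i)) + v i) (\<lambda>i. v i * of_real (fst (z i))) (\<lambda>i. w i * of_real (fst (z i))) P"
proof -
  have d: "D1ok (\<lambda>x. fst x * P x)" "D2ok (\<lambda>x. fst x * P x)" using ok_mx[OF assms] by auto
  have e1: "deriv (\<lambda>s. s * P (s, y)) t = 1 * P (t, y) + deriv (\<lambda>s. P (s, y)) t * t" for y t
    by (rule DERIV_imp_deriv, rule DERIV_mult[OF DERIV_ident D1ok_deriv[OF assms(1)]])
  have e2: "deriv (\<lambda>s. y * P (y, s)) t = y * deriv (\<lambda>s. P (y, s)) t" for y t
    by (rule DERIV_imp_deriv, rule DERIV_cmult[OF D2ok_deriv[OF assms(2)]])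
  show ?thesis
    unfolding LamR_alt[OF d] LamR_alt[OF assms]
    by (rule sum.cong) (simp_all add: e1 e2 algebra_simps)
qed

lemma LamR_my:
  assumes "D1ok P" "D2ok P"
  shows "LamR u v w (\<lambda>x. snd x * P x) =
    LamR (\<lambda>i. u i * of_real (snd (z i)) + w i) (\<lambda>i. v i * of_real (snd (z i))) (\<lambda>i. w i * of_real (snd (z i))) P"
proof -
  have d: "D1ok (\<lambda>x. snd x * P x)" "D2ok (\<lambda>x. snd x * P x)" using ok_my[OF assms] by auto
  have e2: "deriv (\<lambda>s. s * P (y, s)) t = 1 * P (y, t) + deriv (\<lambda>s. P (y, s)) t * t" for y t
    by (rule DERIV_imp_deriv, rule DERIV_mult[OF DERIV_ident D2ok_deriv[OF assms(2)]])
  have e1: "deriv (\<lambda>s. y * P (s, y)) t = y * deriv (\<lambda>s. P (s, y)) t" for y t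
    by (rule DERIV_imp_deriv, rule DERIV_cmult[OF D1ok_deriv[OF assms(1)]])
  show ?thesis
    unfolding LamR_alt[OF d] LamR_alt[OF assms]
    by (rule sum.cong) (simp_all add: e1 e2 algebra_simps)
qed

lemma monoR_Suc1: "(\<lambda>x. fst x * monoR a x) = monoR (Suc (fst a), snd a)"
  by (simp add: monoR_def fun_eq_iff)

lemma monoR_Suc2: "(\<lambda>x. snd x * monoR a x) = monoR (fst a, Suc (snd a))"
  by (simp add: monoR_def fun_eq_iff)

lemma PR_vanish:
  "PR d P \<Longrightarrow> \<forall>u v w. (\<forall>a\<in>Td d. LamR u v w (monoR a) = 0) \<longrightarrow> LamR u v w P = 0"
proof (induction rule: PR.induct)
  case (const d c)
  show ?case
  proof (intro allI impI)
    fix u v w assume h: "\<forall>a\<in>Td d. LamR u v w (monoR a) = 0"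
    have "(0, 0) \<in> Td d" by (simp add: Td_def)
    then have "LamR u v w (monoR (0,0)) = 0" using h by blast
    moreover have "(\<lambda>x. c) = (\<lambda>x. c * monoR (0,0) x)" by (simp add: monoR_def)
    ultimately show "LamR u v w (\<lambda>x. c) = 0" using LamR_smul[of "monoR (0,0)"] monoR_ok by simp
  qed
next
  case (mx d P)
  have ok: "D1ok P" "D2ok P" using PR_ok[OF mx.hyps] by auto
  show ?case
  proof (intro allI impI)
    fix u v w assume h: "\<forall>a\<in>Td (Suc d). LamR u v w (monoR a) = 0"
    let ?u = "\<lambda>i. u i * of_real (fst (z i)) + v i" and ?v = "\<lambda>i. v i * of_real (fst (z i))"
      and ?w = "\<lambda>i. w i * of_real (fst (z i))"
    have "\<forall>a\<in>Td d. LamR ?u ?v ?w (monoR a) = 0"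
    proof
      fix a assume a: "a \<in> Td d"
      have "LamR ?u ?v ?w (monoR a) = LamR u v w (\<lambda>x. fst x * monoR a x)"
        using LamR_mx[of "monoR a" u v w] monoR_ok by simp
      also have "\<dots> = LamR u v w (monoR (Suc (fst a), snd a))" by (simp add: monoR_Suc1)
      also have "\<dots> = 0" using h a by (simp add: Td_def)
      finally show "LamR ?u ?v ?w (monoR a) = 0" .
    qed
    then have "LamR ?u ?v ?w P = 0" using mx.IH by blast
    then show "LamR u v w (\<lambda>x. fst x * P x) = 0" using LamR_mx[OF ok] by simp
  qed
next
  case (my d P)
  have ok: "D1ok P" "D2ok P" using PR_ok[OF my.hyps] by auto
  show ?case
  proof (intro allI impI)
    fix u v w assume h: "\<forall>a\<in>Td (Suc d). LamR u v w (monoR a) = 0"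
    let ?u = "\<lambda>i. u i * of_real (snd (z i)) + w i" and ?v = "\<lambda>i. v i * of_real (snd (z i))"
      and ?w = "\<lambda>i. w i * of_real (snd (z i))"
    have "\<forall>a\<in>Td d. LamR ?u ?v ?w (monoR a) = 0"
    proof
      fix a assume a: "a \<in> Td d"
      have "LamR ?u ?v ?w (monoR a) = LamR u v w (\<lambda>x. snd x * monoR a x)"
        using LamR_my[of "monoR a" u v w] monoR_ok by simp
      also have "\<dots> = LamR u v w (monoR (fst a, Suc (snd a)))" by (simp add: monoR_Suc2)
      also have "\<dots> = 0" using h a by (simp add: Td_def)
      finally show "LamR ?u ?v ?w (monoR a) = 0" .
    qed
    then have "LamR ?u ?v ?w P = 0" using my.IH by blast
    then show "LamR u v w (\<lambda>x. snd x * P x) = 0" using LamR_my[OF ok] by simp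
  qed
next
  case (add d P Q)
  then show ?case using LamR_add PR_ok by (metis add_0)
next
  case (smul d P c)
  then show ?case using LamR_smul PR_ok by (metis mult_zero_right)
next
  case (up d P)
  have "Td d \<subseteq> Td (Suc d)" by (auto simp: Td_def)
  then show ?case using up.IH by blast
qed

end

lemma PR_affine:
  assumes "PR d P"
  shows "PR (Suc d) (\<lambda>x. (\<alpha> * fst x + \<beta> * snd x + \<gamma>) * P x)"
proof -
  have "PR (Suc d) (\<lambda>x. (\<alpha> * (fst x * P x) + \<beta> * (snd x * P x)) + \<gamma> * P x)"
    by (rule PR.add[OF PR.add[OF PR.smul[OF PR.mx[OF assms]] PR.smul[OF PR.my[OF assms]]] PR.smul[OF PR.up[OF assms]]])
  moreover have "(\<lambda>x. (\<alpha> * (fst x * P x) + \<beta> * (snd x * P x)) + \<gamma> * P x) = (\<lambda>x. (\<alpha> * fst x + \<beta> * snd x + \<gamma>) * P x)"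
    by (simp add: fun_eq_iff algebra_simps)
  ultimately show ?thesis by simp
qed

lemma PR_mono: "PR d P \<Longrightarrow> d \<le> e \<Longrightarrow> PR e P"
proof (induction e)
  case 0 then show ?case by simp
next
  case (Suc e)
  show ?case
  proof (cases "d = Suc e")
    case True then show ?thesis using Suc.prems by simp
  next
    case False then have "d \<le> e" using Suc.prems by simp
    then show ?thesis using Suc.IH Suc.prems(1) PR.up by blast
  qed
qed

lemma PR_prod:
  assumes "finite J"
  shows "PR (2 * card J) (\<lambda>x. \<Prod>j\<in>J. (\<alpha> j * fst x + \<beta> j * snd x + \<gamma> j) ^ 2)"
  using assms
proof (induction J rule: finite_induct)
  case empty
  then show ?case using PR.const[of 0 1] by simp
next
  case (insert j J)
  have "PR (Suc (Suc (2 * card J))) (\<lambda>x. (\<alpha> j * fst x + \<beta> j * snd x + \<gamma> j) * ((\<alpha> j * fst x + \<beta> j * snd x + \<gamma> j) *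
      (\<Prod>j\<in>J. (\<alpha> j * fst x + \<beta> j * snd x + \<gamma> j) ^ 2)))"
    by (intro PR_affine insert.IH)
  moreover have "Suc (Suc (2 * card J)) = 2 * card (insert j J)" using insert by simp
  moreover have "(\<lambda>x. (\<alpha> j * fst x + \<beta> j * snd x + \<gamma> j) * ((\<alpha> j * fst x + \<beta> j * snd x + \<gamma> j) *
      (\<Prod>j\<in>J. (\<alpha> j * fst x + \<beta> j * snd x + \<gamma> j) ^ 2))) = 
      (\<lambda>x. \<Prod>j\<in>insert j J. (\<alpha> j * fst x + \<beta> j * snd x + \<gamma> j) ^ 2)"
    using insert(1,2) by (simp add: prod.insert power2_eq_square mult.assoc)
  ultimately show ?case by metis
qed

lemma deriv_sq_zero:
  assumes g: "(g has_real_derivative G) (at t)" and h: "(h has_real_derivative H) (at t)" and g0: "g t = 0"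
  shows "((\<lambda>s. (g s)^2 * h s) has_real_derivative 0) (at t)"
proof -
  have "((\<lambda>s. (g s)^2 * h s) has_real_derivative (of_nat 2 * (G * g t ^ (2 - Suc 0))) * h t + H * (g t)^2) (at t)"
    by (rule DERIV_mult[OF DERIV_power[OF g] h])
  then show ?thesis using g0 by simp
qed

context
  fixes z :: "nat \<Rightarrow> real \<times> real" and N :: nat
begin

lemma key_vanish:
  assumes inj: "inj_on z {..<N}" and i: "i < N"
    and h: "\<forall>a\<in>Td (2 * N - 1). LamR z N u v w (monoR a) = 0"
  shows "u i = 0 \<and> v i = 0 \<and> w i = 0"
proof -
  define J where "J = {..<N} - {i}"
  define \<alpha> where "\<alpha> j = fst (z i) - fst (z j)" for j
  define \<beta> where "\<beta> j = snd (z i) - snd (z j)" for j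
  define \<gamma> where "\<gamma> j = - (fst (z j) * \<alpha> j + snd (z j) * \<beta> j)" for j
  define lf where "lf j x = \<alpha> j * fst x + \<beta> j * snd x + \<gamma> j" for j x
  define Q where "Q x = (\<Prod>j\<in>J. (lf j x)^2)" for x
  have finJ: "finite J" unfolding J_def by simp
  have cardJ: "card J = N - 1" unfolding J_def using i by simp
  have NK: "Suc (2 * card J) = 2 * N - 1" using cardJ i by simp
  have PRQ0: "PR (2 * card J) Q" unfolding Q_def lf_def by (rule PR_prod[OF finJ])
  have PRQ: "PR (2 * N - 1) Q" using PR_mono[OF PRQ0] NK by simp
  define P1 where "P1 x = (fst x - fst (z i)) * Q x" for x
  define P2 where "P2 x = (snd x - snd (z i)) * Q x" for x
  have PRP1: "PR (2 * N - 1) P1"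
  proof -
    have "PR (Suc (2 * card J)) (\<lambda>x. (1 * fst x + 0 * snd x + (- fst (z i))) * Q x)"
      by (rule PR_affine[OF PRQ0])
    then show ?thesis using NK unfolding P1_def by simp
  qed
  have PRP2: "PR (2 * N - 1) P2"
  proof -
    have "PR (Suc (2 * card J)) (\<lambda>x. (0 * fst x + 1 * snd x + (- snd (z i))) * Q x)"
      by (rule PR_affine[OF PRQ0])
    then show ?thesis using NK unfolding P2_def by simp
  qed
  have lfz: "lf j (z j) = 0" for j unfolding lf_def \<alpha>_def \<beta>_def \<gamma>_def by (simp add: algebra_simps)
  have Qzi: "Q (z i) \<noteq> 0"
  proof -
    have "lf j (z i) \<noteq> 0" if j: "j \<in> J" for j
    proof
      assume "lf j (z i) = 0"
      then have "(\<alpha> j)^2 + (\<beta> j)^2 = 0" unfolding lf_def \<alpha>_def \<beta>_def \<gamma>_def by (simp add: algebra_simps power2_eq_square)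
      then have "\<alpha> j = 0" "\<beta> j = 0" by (simp_all add: sum_power2_eq_zero_iff)
      then have "z i = z j" unfolding \<alpha>_def \<beta>_def by (simp add: prod_eq_iff)
      moreover have "j < N" "j \<noteq> i" using j unfolding J_def by auto
      ultimately show False using inj i unfolding inj_on_def by auto
    qed
    then show ?thesis unfolding Q_def using finJ by simp
  qed
  have other: "R (z k) = 0 \<and> deriv (\<lambda>s. R (s, snd (z k))) (fst (z k)) = 0 \<and> deriv (\<lambda>s. R (fst (z k), s)) (snd (z k)) = 0"
    if k: "k \<in> J" and R: "\<And>x. R x = (lf k x)^2 * S x" and S: "PR d S" for k R S d
  proof -
    have okS: "D1ok S" "D2ok S" using PR_ok[OF S] by auto
    have R': "R = (\<lambda>x. (lf k x)^2 * S x)" using R by (simp add: fun_eq_iff)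
    have l1: "((\<lambda>s. lf k (s, y)) has_real_derivative \<alpha> k) (at t)" for y t
      unfolding lf_def by (auto intro!: derivative_eq_intros)
    have l2: "((\<lambda>s. lf k (y, s)) has_real_derivative \<beta> k) (at t)" for y t
      unfolding lf_def by (auto intro!: derivative_eq_intros)
    have d1: "((\<lambda>s. (lf k (s, snd (z k)))^2 * S (s, snd (z k))) has_real_derivative 0) (at (fst (z k)))"
      by (rule deriv_sq_zero[OF l1 D1ok_deriv[OF okS(1)]]) (simp add: lfz)
    have d2: "((\<lambda>s. (lf k (fst (z k), s))^2 * S (fst (z k), s)) has_real_derivative 0) (at (snd (z k)))"
      by (rule deriv_sq_zero[OF l2 D2ok_deriv[OF okS(2)]]) (simp add: lfz)
    show ?thesis unfolding R' using DERIV_imp_deriv[OF d1] DERIV_imp_deriv[OF d2] lfz by simp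
  qed
  have Qsplit: "Q x = (lf k x)^2 * (\<Prod>j\<in>J - {k}. (lf j x)^2)" if "k \<in> J" for k x
    unfolding Q_def using prod.remove[OF finJ that] by simp
  have PRrest: "PR (2 * card (J - {k})) (\<lambda>x. \<Prod>j\<in>J - {k}. (lf j x)^2)" for k
    unfolding lf_def by (rule PR_prod) (simp add: finJ)
  have oQ: "Q (z k) = 0 \<and> deriv (\<lambda>s. Q (s, snd (z k))) (fst (z k)) = 0 \<and> deriv (\<lambda>s. Q (fst (z k), s)) (snd (z k)) = 0"
    if "k \<in> J" for k
    by (rule other[OF that Qsplit[OF that] PRrest])
  have oP1: "P1 (z k) = 0 \<and> deriv (\<lambda>s. P1 (s, snd (z k))) (fst (z k)) = 0 \<and> deriv (\<lambda>s. P1 (fst (z k), s)) (snd (z k)) = 0"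
    if "k \<in> J" for k
  proof (rule other[OF that])
    show "P1 x = (lf k x)^2 * ((1 * fst x + 0 * snd x + (- fst (z i))) * (\<Prod>j\<in>J - {k}. (lf j x)^2))" for x
      unfolding P1_def Qsplit[OF that] by (simp add: algebra_simps)
    show "PR (Suc (2 * card (J - {k}))) (\<lambda>x. (1 * fst x + 0 * snd x + (- fst (z i))) * (\<Prod>j\<in>J - {k}. (lf j x)^2))"
      by (rule PR_affine[OF PRrest])
  qed
  have oP2: "P2 (z k) = 0 \<and> deriv (\<lambda>s. P2 (s, snd (z k))) (fst (z k)) = 0 \<and> deriv (\<lambda>s. P2 (fst (z k), s)) (snd (z k)) = 0"
    if "k \<in> J" for k
  proof (rule other[OF that])
    show "P2 x = (lf k x)^2 * ((0 * fst x + 1 * snd x + (- snd (z i))) * (\<Prod>j\<in>J - {k}. (lf j x)^2))" for x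
      unfolding P2_def Qsplit[OF that] by (simp add: algebra_simps)
    show "PR (Suc (2 * card (J - {k}))) (\<lambda>x. (0 * fst x + 1 * snd x + (- snd (z i))) * (\<Prod>j\<in>J - {k}. (lf j x)^2))"
      by (rule PR_affine[OF PRrest])
  qed
  have okQ: "D1ok Q" "D2ok Q" using PR_ok[OF PRQ] by auto
  have okP1: "D1ok P1" "D2ok P1" using PR_ok[OF PRP1] by auto
  have okP2: "D1ok P2" "D2ok P2" using PR_ok[OF PRP2] by auto
  have P1a: "deriv (\<lambda>s. P1 (s, snd (z i))) (fst (z i)) = Q (z i)"
  proof -
    have "((\<lambda>s. (s - fst (z i)) * Q (s, snd (z i))) has_real_derivative
       1 * Q (fst (z i), snd (z i)) + deriv (\<lambda>s. Q (s, snd (z i))) (fst (z i)) * (fst (z i) - fst (z i))) (at (fst (z i)))"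
      by (rule DERIV_mult[OF _ D1ok_deriv[OF okQ(1)]]) (auto intro!: derivative_eq_intros)
    then show ?thesis unfolding P1_def by (intro DERIV_imp_deriv) simp
  qed
  have P1b: "deriv (\<lambda>s. P1 (fst (z i), s)) (snd (z i)) = 0"
    unfolding P1_def by simp
  have P2b: "deriv (\<lambda>s. P2 (fst (z i), s)) (snd (z i)) = Q (z i)"
  proof -
    have "((\<lambda>s. (s - snd (z i)) * Q (fst (z i), s)) has_real_derivative
       1 * Q (fst (z i), snd (z i)) + deriv (\<lambda>s. Q (fst (z i), s)) (snd (z i)) * (snd (z i) - snd (z i))) (at (snd (z i)))"
      by (rule DERIV_mult[OF _ D2ok_deriv[OF okQ(2)]]) (auto intro!: derivative_eq_intros)
    then show ?thesis unfolding P2_def by (intro DERIV_imp_deriv) simp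
  qed
  have P2a: "deriv (\<lambda>s. P2 (s, snd (z i))) (fst (z i)) = 0"
    unfolding P2_def by simp
  have split: "(\<Sum>k<N. f k) = f i" if "\<And>k. k \<in> J \<Longrightarrow> f k = 0" for f :: "nat \<Rightarrow> complex"
  proof -
    have "(\<Sum>k<N. f k) = f i + (\<Sum>k\<in>J. f k)" unfolding J_def using i by (simp add: sum.remove)
    also have "(\<Sum>k\<in>J. f k) = 0" using that by simp
    finally show ?thesis by simp
  qed
  have P1zi: "P1 (z i) = 0" and P2zi: "P2 (z i) = 0" unfolding P1_def P2_def by simp_all
  have "LamR z N u v w P1 = 0" using PR_vanish[OF PRP1] h by blast
  moreover have "LamR z N u v w P1 = v i * of_real (Q (z i))"
    unfolding LamR_alt[OF okP1] by (subst split) (simp_all add: oP1 P1a P1b P1zi)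
  ultimately have v: "v i = 0" using Qzi by simp
  have "LamR z N u v w P2 = 0" using PR_vanish[OF PRP2] h by blast
  moreover have "LamR z N u v w P2 = w i * of_real (Q (z i))"
    unfolding LamR_alt[OF okP2] by (subst split) (simp_all add: oP2 P2a P2b P2zi)
  ultimately have w: "w i = 0" using Qzi by simp
  have "LamR z N u v w Q = 0" using PR_vanish[OF PRQ] h by blast
  moreover have "LamR z N u v w Q = u i * of_real (Q (z i))"
    unfolding LamR_alt[OF okQ] by (subst split) (simp_all add: oQ v w)
  ultimately have u: "u i = 0" using Qzi by simp
  show ?thesis using u v w by simp
qed

end

lemma poly2_eval_monom2: "poly2_eval (monom2 a) = (\<lambda>x. complex_of_real (monoR a x))"
proof
  fix x
  have "{b. monom2 a b \<noteq> 0} = {a}" by (auto simp: monom2_def)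
  then show "poly2_eval (monom2 a) x = complex_of_real (monoR a x)"
    unfolding poly2_eval_def by (simp add: monom2_def monoR_def)
qed

definition Hser :: "(nat \<Rightarrow> real \<times> real) \<Rightarrow> nat \<Rightarrow> (nat \<Rightarrow> complex) \<Rightarrow> (nat \<Rightarrow> complex) \<Rightarrow> (nat \<Rightarrow> complex) \<Rightarrow> coeffs2" where
  "Hser z N u v w = (\<lambda>a. \<Sum>i<N.
       u i * gF (\<lambda>p. poly2_eval p (z i)) a
     + v i * gF (\<lambda>p. pd1 (poly2_eval p) (z i)) a
     + w i * gF (\<lambda>p. pd2 (poly2_eval p) (z i)) a)"

lemma hermite_span_Hser: "hermite_series_span z N = {Hser z N u v w | u v w. True}"
  unfolding hermite_series_span_def Hser_def by auto

lemma Hser_alt: "Hser z N u v w a = LamR z N u v w (monoR a) / of_nat (fact (fst a) * fact (snd a))"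
  unfolding Hser_def LamR_def Lam_def gF_def poly2_eval_monom2
  by (simp add: sum_divide_distrib add_divide_distrib)

lemma Hser_vanish:
  assumes inj: "inj_on z {..<N}" and h: "\<forall>a\<in>Td (2 * N - 1). Hser z N u v w a = 0"
  shows "\<forall>i<N. u i = 0 \<and> v i = 0 \<and> w i = 0"
proof (intro allI impI)
  fix i assume i: "i < N"
  have "\<forall>a\<in>Td (2 * N - 1). LamR z N u v w (monoR a) = 0"
  proof
    fix a assume "a \<in> Td (2 * N - 1)"
    then have "LamR z N u v w (monoR a) / of_nat (fact (fst a) * fact (snd a)) = 0"
      using h Hser_alt by metis
    moreover have "(of_nat (fact (fst a) * fact (snd a)) :: complex) \<noteq> 0"
      by (simp del: of_nat_mult)
    ultimately show "LamR z N u v w (monoR a) = 0" by simp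
  qed
  then show "u i = 0 \<and> v i = 0 \<and> w i = 0" using key_vanish[OF inj i] by blast
qed

lemma Hser_eq_zero:
  assumes "\<forall>i<N. u i = 0 \<and> v i = 0 \<and> w i = 0"
  shows "Hser z N u v w = 0"
  unfolding Hser_def using assms by (simp add: fun_eq_iff)

context
  fixes z :: "nat \<Rightarrow> real \<times> real" and N :: nat
begin

definition Gen :: "nat \<times> nat \<Rightarrow> coeffs2" where
  "Gen p = (if snd p = 0 then gF (\<lambda>q. poly2_eval q (z (fst p)))
            else if snd p = 1 then gF (\<lambda>q. pd1 (poly2_eval q) (z (fst p)))
            else gF (\<lambda>q. pd2 (poly2_eval q) (z (fst p))))"

definition Iset :: "(nat \<times> nat) set" where
  "Iset = {..<N} \<times> {0, 1, 2}"

lemma finite_Iset: "finite Iset" unfolding Iset_def by simp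

lemma card_Iset: "card Iset = 3 * N" unfolding Iset_def by (simp add: card_cartesian_product)

lemma sum_Gen: "(\<Sum>p\<in>Iset. cscale (c p) (Gen p)) = Hser z N (\<lambda>i. c (i, 0)) (\<lambda>i. c (i, 1)) (\<lambda>i. c (i, 2))"
proof
  fix a
  have "(\<Sum>p\<in>Iset. cscale (c p) (Gen p)) a = (\<Sum>p\<in>Iset. c p * Gen p a)"
    by (simp add: sum_fun_apply cscale_def)
  also have "\<dots> = (\<Sum>i<N. \<Sum>k\<in>{0, 1, 2}. c (i, k) * Gen (i, k) a)"
    unfolding Iset_def by (subst sum.cartesian_product) (simp add: case_prod_beta')
  also have "\<dots> = Hser z N (\<lambda>i. c (i, 0)) (\<lambda>i. c (i, 1)) (\<lambda>i. c (i, 2)) a"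
    unfolding Hser_def by (simp add: Gen_def algebra_simps)
  finally show "(\<Sum>p\<in>Iset. cscale (c p) (Gen p)) a = Hser z N (\<lambda>i. c (i, 0)) (\<lambda>i. c (i, 1)) (\<lambda>i. c (i, 2)) a" .
qed

lemma Hser_cong: "(\<And>i. i < N \<Longrightarrow> u i = u' i \<and> v i = v' i \<and> w i = w' i) \<Longrightarrow> Hser z N u v w = Hser z N u' v' w'"
  unfolding Hser_def by (simp add: fun_eq_iff)

lemma Gen_zero:
  assumes inj: "inj_on z {..<N}" and s: "(\<Sum>p\<in>Iset. cscale (c p) (Gen p)) = 0" and p: "p \<in> Iset"
  shows "c p = 0"
proof -
  have "\<forall>i<N. c (i, 0) = 0 \<and> c (i, 1) = 0 \<and> c (i, 2) = 0"
    by (rule Hser_vanish[OF inj]) (use s sum_Gen in simp)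
  then show ?thesis using p unfolding Iset_def by auto
qed

lemma inj_Gen: assumes inj: "inj_on z {..<N}" shows "inj_on Gen Iset"
proof (rule inj_onI)
  fix p q assume pq: "p \<in> Iset" "q \<in> Iset" "Gen p = Gen q"
  show "p = q"
  proof (rule ccontr)
    assume ne: "p \<noteq> q"
    define c where "c r = (if r = p then 1 else if r = q then -1 else 0 :: complex)" for r
    have "(\<Sum>r\<in>Iset. cscale (c r) (Gen r)) = (\<Sum>r\<in>{p, q}. cscale (c r) (Gen r))"
      by (rule sum.mono_neutral_right) (use pq finite_Iset in \<open>auto simp: c_def cscale_def fun_eq_iff\<close>)
    also have "\<dots> = cscale 1 (Gen p) + cscale (-1) (Gen q)" using ne by (simp add: c_def)
    also have "\<dots> = 0" using pq(3) by (simp add: cscale_def fun_eq_iff)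
    finally have "c p = 0" using Gen_zero[OF inj _ pq(1)] by blast
    then show False by (simp add: c_def)
  qed
qed

lemma H_span: "hermite_series_span z N = cs.span (Gen ` Iset)"
proof -
  have "cs.span (Gen ` Iset) = range (\<lambda>f. \<Sum>x\<in>Gen ` Iset. cscale (f x) x)"
    using cs.span_finite[of "Gen ` Iset"] finite_Iset by simp
  show ?thesis
  proof
    show "hermite_series_span z N \<subseteq> cs.span (Gen ` Iset)"
    proof
      fix g assume "g \<in> hermite_series_span z N"
      then obtain u v w where g: "g = Hser z N u v w" unfolding hermite_span_Hser by blast
      define c where "c (p :: nat \<times> nat) = (if snd p = 0 then u (fst p) else if snd p = 1 then v (fst p) else w (fst p))" for p
      have "g = (\<Sum>p\<in>Iset. cscale (c p) (Gen p))" unfolding g sum_Gen by (simp add: c_def)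
      also have "\<dots> \<in> cs.span (Gen ` Iset)"
        by (intro cs.span_sum cs.span_scale[unfolded] cs.span_base) auto
      finally show "g \<in> cs.span (Gen ` Iset)" .
    qed
  next
    show "cs.span (Gen ` Iset) \<subseteq> hermite_series_span z N"
    proof -
      have sub: "cs.subspace (hermite_series_span z N)"
      proof (rule cs_subspaceI)
        have "Hser z N (\<lambda>_. 0) (\<lambda>_. 0) (\<lambda>_. 0) = 0" by (simp add: Hser_def fun_eq_iff)
        then show "0 \<in> hermite_series_span z N" unfolding hermite_span_Hser by (metis (mono_tags, lifting) mem_Collect_eq)
      next
        fix x y assume "x \<in> hermite_series_span z N" "y \<in> hermite_series_span z N"
        then obtain u v w u' v' w' where xy: "x = Hser z N u v w" "y = Hser z N u' v' w'"
          unfolding hermite_span_Hser by blast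
        have "x + y = Hser z N (\<lambda>i. u i + u' i) (\<lambda>i. v i + v' i) (\<lambda>i. w i + w' i)"
          unfolding xy Hser_def by (simp add: fun_eq_iff sum.distrib[symmetric] algebra_simps)
        then show "x + y \<in> hermite_series_span z N" unfolding hermite_span_Hser by blast
      next
        fix c x assume "x \<in> hermite_series_span z N"
        then obtain u v w where xy: "x = Hser z N u v w"
          unfolding hermite_span_Hser by blast
        have "cscale c x = Hser z N (\<lambda>i. c * u i) (\<lambda>i. c * v i) (\<lambda>i. c * w i)"
          unfolding xy Hser_def cscale_def by (simp add: fun_eq_iff sum_distrib_left algebra_simps)
        then show "cscale c x \<in> hermite_series_span z N" unfolding hermite_span_Hser by blast
      qed
      have "Gen p \<in> hermite_series_span z N" if p: "p \<in> Iset" for p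
      proof -
        define c where "c r = (if r = p then 1 else 0 :: complex)" for r
        have "(\<Sum>r\<in>Iset. cscale (c r) (Gen r)) = (\<Sum>r\<in>Iset. if r = p then Gen p else 0)"
          by (rule sum.cong) (auto simp: c_def cscale_def fun_eq_iff)
        also have "\<dots> = Gen p" using p finite_Iset by (simp add: sum.delta)
        finally have "(\<Sum>r\<in>Iset. cscale (c r) (Gen r)) = Gen p" .
        then have "Gen p = Hser z N (\<lambda>i. c (i, 0)) (\<lambda>i. c (i, 1)) (\<lambda>i. c (i, 2))" using sum_Gen by metis
        then show ?thesis unfolding hermite_span_Hser by blast
      qed
      then have "Gen ` Iset \<subseteq> hermite_series_span z N" by blast
      then show "cs.span (Gen ` Iset) \<subseteq> hermite_series_span z N" using sub cs.span_minimal by blast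
    qed
  qed
qed

lemma indep_Gen: assumes inj: "inj_on z {..<N}" shows "cs.independent (Gen ` Iset)"
proof (rule cs.independent_if_scalars_zero)
  show "finite (Gen ` Iset)" using finite_Iset by simp
  fix f x assume s: "(\<Sum>x\<in>Gen ` Iset. cscale (f x) x) = 0" and x: "x \<in> Gen ` Iset"
  have "(\<Sum>p\<in>Iset. cscale (f (Gen p)) (Gen p)) = 0"
    using s sum.reindex[OF inj_Gen[OF inj], of "\<lambda>x. cscale (f x) x"] by simp
  moreover obtain p where "p \<in> Iset" "x = Gen p" using x by blast
  ultimately show "f x = 0" using Gen_zero[OF inj, of "\<lambda>p. f (Gen p)"] by blast
qed

lemma dim_H: assumes inj: "inj_on z {..<N}" shows "cs.dim (hermite_series_span z N) = 3 * N"
proof -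
  have "cs.dim (hermite_series_span z N) = cs.dim (Gen ` Iset)" unfolding H_span by simp
  also have "\<dots> = card (Gen ` Iset)" by (rule cs.dim_eq_card_independent[OF indep_Gen[OF inj]])
  also have "\<dots> = 3 * N" using card_image[OF inj_Gen[OF inj]] card_Iset by simp
  finally show ?thesis .
qed

lemma H_star: assumes inj: "inj_on z {..<N}"
  shows "\<forall>g\<in>hermite_series_span z N. g \<in> Qd (Suc (2 * N - 1)) \<longrightarrow> g = 0"
proof (intro ballI impI)
  fix g assume g: "g \<in> hermite_series_span z N" "g \<in> Qd (Suc (2 * N - 1))"
  then obtain u v w where gu: "g = Hser z N u v w" unfolding hermite_span_Hser by blast
  have "\<forall>a\<in>Td (2 * N - 1). Hser z N u v w a = 0"
    using g(2) unfolding gu Qd_def Td_def by auto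
  then show "g = 0" using Hser_vanish[OF inj] Hser_eq_zero gu by metis
qed

lemma least_space_LTS: "least_space z N = cs.span (LTS (hermite_series_span z N))"
  unfolding least_space_def LTS_def by simp

lemma dim_least: assumes inj: "inj_on z {..<N}" shows "cs.dim (least_space z N) = 3 * N"
proof -
  have "cs.dim (LTS (hermite_series_span z N)) = cs.dim (hermite_series_span z N)"
    by (rule LT_main[of "Gen ` Iset" "Suc (2 * N - 1) - 0" "2 * N - 1" 0])
      (use finite_Iset H_star[OF inj] H_span in \<open>auto simp: Qd_def\<close>)
  then show ?thesis unfolding least_space_LTS cs.dim_span dim_H[OF inj] .
qed

lemma least_Pd: assumes inj: "inj_on z {..<N}" shows "least_space z N \<subseteq> Pd (2 * N - 1)"
  unfolding least_space_LTS using LTS_Pd[OF H_star[OF inj]] subspace_Pd cs.span_minimal by blast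

end

lemma deg2_Pd:
  assumes "h \<in> Pd K"
  shows "deg2 h \<le> K" and "h b \<noteq> 0 \<Longrightarrow> fst b + snd b \<le> deg2 h"
proof -
  have sub: "{fst b + snd b | b. h b \<noteq> 0} \<union> {0} \<subseteq> {0..K}"
    using assms unfolding Pd_def by (auto simp: not_less[symmetric])
  then have fin: "finite ({fst b + snd b | b. h b \<noteq> 0} \<union> {0})" by (rule finite_subset) simp
  have hK: "h (p, q) \<noteq> 0 \<Longrightarrow> p + q \<le> K" for p q using assms unfolding Pd_def by (auto simp: not_le[symmetric])
  show "deg2 h \<le> K" unfolding deg2_def using fin hK by (subst Max_le_iff) auto
  show "h b \<noteq> 0 \<Longrightarrow> fst b + snd b \<le> deg2 h"
  proof -
    assume hb: "h b \<noteq> 0"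
    have "fst b + snd b \<in> {fst b + snd b | b. h b \<noteq> 0} \<union> {0}" using hb by blast
    then show ?thesis unfolding deg2_def by (rule Max_ge[OF fin])
  qed
qed

lemma L_facts:
  assumes inj: "inj_on z {..<N}"
  shows "least_deg_bound z N \<le> 2 * N - 1" and "least_space z N \<subseteq> Pd (least_deg_bound z N)"
proof -
  have ex: "\<forall>h\<in>least_space z N. deg2 h \<le> 2 * N - 1"
    using least_Pd[OF inj] deg2_Pd(1) by blast
  then show "least_deg_bound z N \<le> 2 * N - 1"
    unfolding least_deg_bound_def by (rule Least_le)
  have allL: "\<forall>h\<in>least_space z N. deg2 h \<le> least_deg_bound z N"
    unfolding least_deg_bound_def by (rule LeastI[of _ "2 * N - 1"]) (rule ex)
  show "least_space z N \<subseteq> Pd (least_deg_bound z N)"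
  proof
    fix h assume h: "h \<in> least_space z N"
    then have hP: "h \<in> Pd (2 * N - 1)" using least_Pd[OF inj] by blast
    have hL: "deg2 h \<le> least_deg_bound z N" using h allL by blast
    show "h \<in> Pd (least_deg_bound z N)" unfolding Pd_def
    proof (intro CollectI allI impI)
      fix a assume a: "least_deg_bound z N < fst a + snd a"
      show "h a = 0"
      proof (rule ccontr)
        assume "h a \<noteq> 0"
        then have "fst a + snd a \<le> deg2 h" using deg2_Pd(2)[OF hP] by blast
        then show False using a hL by simp
      qed
    qed
  qed
qed

inductive PC :: "nat \<Rightarrow> (complex \<times> complex \<Rightarrow> complex) \<Rightarrow> bool" where
  const: "PC d (\<lambda>x. c)"
| mx: "PC d F \<Longrightarrow> PC (Suc d) (\<lambda>x. fst x * F x)"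
| my: "PC d F \<Longrightarrow> PC (Suc d) (\<lambda>x. snd x * F x)"
| add: "PC d F \<Longrightarrow> PC d G \<Longrightarrow> PC d (\<lambda>x. F x + G x)"
| smul: "PC d F \<Longrightarrow> PC d (\<lambda>x. c * F x)"
| up: "PC d F \<Longrightarrow> PC (Suc d) F"

lemma PC_shift: "PC d F \<Longrightarrow> PC d (\<lambda>x. F (x + s))"
proof (induction rule: PC.induct)
  case (const d c) then show ?case by (rule PC.const)
next
  case (mx d F)
  have "PC (Suc d) (\<lambda>x. fst x * F (x + s) + fst s * F (x + s))"
    by (rule PC.add[OF PC.mx[OF mx.IH] PC.up[OF PC.smul[OF mx.IH]]])
  then show ?case by (simp add: algebra_simps)
next
  case (my d F)
  have "PC (Suc d) (\<lambda>x. snd x * F (x + s) + snd s * F (x + s))"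
    by (rule PC.add[OF PC.my[OF my.IH] PC.up[OF PC.smul[OF my.IH]]])
  then show ?case by (simp add: algebra_simps)
next
  case (add d F G) then show ?case by (simp add: PC.add)
next
  case (smul d F c) then show ?case by (simp add: PC.smul)
next
  case (up d F) then show ?case by (simp add: PC.up)
qed

lemma PC_diff:
  "PC d F \<Longrightarrow> (d = 0 \<longrightarrow> (\<exists>a. F = (\<lambda>_. a))) \<and>
     (\<forall>m. d = Suc m \<longrightarrow> PC m (\<lambda>x. F (x + (c, 0)) - F x) \<and> PC m (\<lambda>x. F (x + (0, c)) - F x))"
proof (induction rule: PC.induct)
  case (const d a)
  have "PC m (\<lambda>x. 0)" for m by (rule PC.const)
  then show ?case by auto
next
  case (mx d F)
  show ?case
  proof (intro conjI allI impI)
    fix m assume "Suc d = Suc m"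
    then have m: "m = d" by simp
    show "PC m (\<lambda>x. fst (x + (c, 0)) * F (x + (c, 0)) - fst x * F x)"
    proof (cases d)
      case 0
      then obtain a where "F = (\<lambda>_. a)" using mx.IH by blast
      then show ?thesis using m 0 PC.const[of 0 "c * a"] by (simp add: algebra_simps)
    next
      case (Suc m')
      have "PC d (\<lambda>x. fst x * (F (x + (c, 0)) - F x) + c * F (x + (c, 0)))"
        using Suc mx.IH PC.add PC.mx PC.smul PC_shift[OF mx.hyps] by blast
      then show ?thesis using m by (simp add: algebra_simps)
    qed
    show "PC m (\<lambda>x. fst (x + (0, c)) * F (x + (0, c)) - fst x * F x)"
    proof (cases d)
      case 0
      then obtain a where "F = (\<lambda>_. a)" using mx.IH by blast
      then show ?thesis using m 0 PC.const[of 0 0] by (simp add: algebra_simps)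
    next
      case (Suc m')
      have "PC d (\<lambda>x. fst x * (F (x + (0, c)) - F x))"
        using Suc mx.IH PC.mx by blast
      then show ?thesis using m by (simp add: algebra_simps)
    qed
  qed simp
next
  case (my d F)
  show ?case
  proof (intro conjI allI impI)
    fix m assume "Suc d = Suc m"
    then have m: "m = d" by simp
    show "PC m (\<lambda>x. snd (x + (0, c)) * F (x + (0, c)) - snd x * F x)"
    proof (cases d)
      case 0
      then obtain a where "F = (\<lambda>_. a)" using my.IH by blast
      then show ?thesis using m 0 PC.const[of 0 "c * a"] by (simp add: algebra_simps)
    next
      case (Suc m')
      have "PC d (\<lambda>x. snd x * (F (x + (0, c)) - F x) + c * F (x + (0, c)))"
        using Suc my.IH PC.add PC.my PC.smul PC_shift[OF my.hyps] by blast
      then show ?thesis using m by (simp add: algebra_simps)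
    qed
    show "PC m (\<lambda>x. snd (x + (c, 0)) * F (x + (c, 0)) - snd x * F x)"
    proof (cases d)
      case 0
      then obtain a where "F = (\<lambda>_. a)" using my.IH by blast
      then show ?thesis using m 0 PC.const[of 0 0] by (simp add: algebra_simps)
    next
      case (Suc m')
      have "PC d (\<lambda>x. snd x * (F (x + (c, 0)) - F x))"
        using Suc my.IH PC.my by blast
      then show ?thesis using m by (simp add: algebra_simps)
    qed
  qed simp
next
  case (add d F G)
  show ?case
  proof (intro conjI allI impI)
    assume "d = 0"
    then obtain a b where "F = (\<lambda>_. a)" "G = (\<lambda>_. b)" using add.IH by blast
    then show "\<exists>a. (\<lambda>x. F x + G x) = (\<lambda>_. a)" by auto
  next
    fix m assume d: "d = Suc m"
    have "PC m (\<lambda>x. (F (x + (c, 0)) - F x) + (G (x + (c, 0)) - G x))"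
      using add.IH d PC.add by blast
    then show "PC m (\<lambda>x. F (x + (c, 0)) + G (x + (c, 0)) - (F x + G x))" by (simp add: algebra_simps)
  next
    fix m assume d: "d = Suc m"
    have "PC m (\<lambda>x. (F (x + (0, c)) - F x) + (G (x + (0, c)) - G x))"
      using add.IH d PC.add by blast
    then show "PC m (\<lambda>x. F (x + (0, c)) + G (x + (0, c)) - (F x + G x))" by (simp add: algebra_simps)
  qed
next
  case (smul d F b)
  show ?case
  proof (intro conjI allI impI)
    assume "d = 0"
    then obtain a where "F = (\<lambda>_. a)" using smul.IH by blast
    then show "\<exists>a. (\<lambda>x. b * F x) = (\<lambda>_. a)" by auto
  next
    fix m assume d: "d = Suc m"
    have "PC m (\<lambda>x. b * (F (x + (c, 0)) - F x))"
      using smul.IH d PC.smul by blast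
    then show "PC m (\<lambda>x. b * F (x + (c, 0)) - b * F x)" by (simp add: algebra_simps)
  next
    fix m assume d: "d = Suc m"
    have "PC m (\<lambda>x. b * (F (x + (0, c)) - F x))"
      using smul.IH d PC.smul by blast
    then show "PC m (\<lambda>x. b * F (x + (0, c)) - b * F x)" by (simp add: algebra_simps)
  qed
next
  case (up d F)
  show ?case
  proof (intro conjI allI impI)
    fix m assume "Suc d = Suc m"
    then have m: "m = d" by simp
    show "PC m (\<lambda>x. F (x + (c, 0)) - F x)"
    proof (cases d)
      case 0
      then obtain a where "F = (\<lambda>_. a)" using up.IH by blast
      then show ?thesis using m 0 PC.const[of 0 0] by simp
    next
      case (Suc m')
      then show ?thesis using m up.IH PC.up by blast
    qed
    show "PC m (\<lambda>x. F (x + (0, c)) - F x)"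
    proof (cases d)
      case 0
      then obtain a where "F = (\<lambda>_. a)" using up.IH by blast
      then show ?thesis using m 0 PC.const[of 0 0] by simp
    next
      case (Suc m')
      then show ?thesis using m up.IH PC.up by blast
    qed
  qed simp
qed


lemma PC_grid:
  "PC d F \<Longrightarrow> (\<forall>k l. k + l \<le> d \<longrightarrow> F (p + (c * of_nat k, c * of_nat l)) = 0) \<Longrightarrow>
    F (p + (c * of_nat k, c * of_nat l)) = 0"
proof (induction d arbitrary: F p k l)
  case 0
  then obtain a where "F = (\<lambda>_. a)" using PC_diff[OF 0(1)] by blast
  moreover have "F (p + (c * of_nat 0, c * of_nat 0)) = 0" using 0(2) by blast
  ultimately show ?case by simp
next
  case (Suc m)
  define D1 where "D1 x = F (x + (c, 0)) - F x" for x
  define D2 where "D2 x = F (x + (0, c)) - F x" for x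
  have PD: "PC m D1" "PC m D2" using PC_diff[OF Suc.prems(1), of c] unfolding D1_def D2_def by auto
  have sh1: "p + (c * of_nat k, c * of_nat l) + (c, 0) = p + (c * of_nat (Suc k), c * of_nat l)" for k l
    by (simp add: algebra_simps)
  have sh2: "p + (c * of_nat k, c * of_nat l) + (0, c) = p + (c * of_nat k, c * of_nat (Suc l))" for k l
    by (simp add: algebra_simps)
  have z1: "D1 (p + (c * of_nat k, c * of_nat l)) = 0" for k l
  proof (rule Suc.IH[OF PD(1)], intro allI impI)
    fix k l assume "k + l \<le> m"
    then show "D1 (p + (c * of_nat k, c * of_nat l)) = 0"
      unfolding D1_def sh1 using Suc.prems(2)[rule_format, of "Suc k" l] Suc.prems(2)[rule_format, of k l] by simp
  qed
  have z2: "D2 (p + (c * of_nat k, c * of_nat l)) = 0" for k l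
  proof (rule Suc.IH[OF PD(2)], intro allI impI)
    fix k l assume "k + l \<le> m"
    then show "D2 (p + (c * of_nat k, c * of_nat l)) = 0"
      unfolding D2_def sh2 using Suc.prems(2)[rule_format, of k "Suc l"] Suc.prems(2)[rule_format, of k l] by simp
  qed
  have g0: "F (p + (c * of_nat 0, c * of_nat l)) = 0" for l
  proof (induction l)
    case 0 then show ?case using Suc.prems(2)[rule_format, of 0 0] by simp
  next
    case (Suc l) then show ?case using z2[of 0 l] unfolding D2_def sh2 by simp
  qed
  have "F (p + (c * of_nat k, c * of_nat l)) = 0" for k
  proof (induction k)
    case 0 then show ?case using g0 by blast
  next
    case (Suc k) then show ?case using z1[of k l] unfolding D1_def sh1 by simp
  qed
  then show ?case .
qed

lemma PC_le: "PC d F \<Longrightarrow> d \<le> e \<Longrightarrow> PC e F"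
proof (induction e)
  case 0 then show ?case by simp
next
  case (Suc e)
  show ?case
  proof (cases "d = Suc e")
    case True then show ?thesis using Suc.prems by simp
  next
    case False then have "d \<le> e" using Suc.prems by simp
    then show ?thesis using Suc.IH Suc.prems(1) PC.up by blast
  qed
qed

lemma PC_monom: "PC (i + j) (\<lambda>x. fst x ^ i * snd x ^ j)"
proof (induction i)
  case 0
  show ?case
  proof (induction j)
    case 0 then show ?case using PC.const[of 0 1] by simp
  next
    case (Suc j) then show ?case using PC.my[OF Suc.IH] by (simp add: algebra_simps)
  qed
next
  case (Suc i) then show ?case using PC.mx[OF Suc.IH] by (simp add: algebra_simps)
qed

lemma PC_sum: "finite A \<Longrightarrow> (\<And>a. a \<in> A \<Longrightarrow> PC d (f a)) \<Longrightarrow> PC d (\<lambda>x. \<Sum>a\<in>A. f a x)"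
proof (induction A rule: finite_induct)
  case empty then show ?case using PC.const[of d 0] by simp
next
  case (insert a A) then show ?case using PC.add[of d "f a" "\<lambda>x. \<Sum>a\<in>A. f a x"] by simp
qed

definition evalC :: "nat \<Rightarrow> coeffs2 \<Rightarrow> complex \<times> complex \<Rightarrow> complex" where
  "evalC L h x = (\<Sum>a\<in>Td L. h a * fst x ^ fst a * snd x ^ snd a)"

lemma PC_evalC: "PC L (evalC L h)"
  unfolding evalC_def
proof (rule PC_sum[OF finite_Td])
  fix a assume "a \<in> Td L"
  then have "PC L (\<lambda>x. fst x ^ fst a * snd x ^ snd a)" using PC_le[OF PC_monom] by (simp add: Td_def)
  then show "PC L (\<lambda>x. h a * fst x ^ fst a * snd x ^ snd a)" using PC.smul by (simp add: mult.assoc)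
qed

lemma univ_zero:
  fixes b :: "nat \<Rightarrow> complex" and c :: complex
  assumes c: "c \<noteq> 0" and h: "\<And>n. (\<Sum>i\<le>L. b i * (c * of_nat n) ^ i) = 0"
  shows "i \<le> L \<Longrightarrow> b i = 0"
proof -
  assume i: "i \<le> L"
  define p where "p = (\<Sum>j\<le>L. monom (b j) j)"
  have ev: "poly p x = (\<Sum>j\<le>L. b j * x ^ j)" for x unfolding p_def by (simp add: poly_sum poly_monom)
  have "p = 0"
  proof (rule ccontr)
    assume "p \<noteq> 0"
    then have fin: "finite {x. poly p x = 0}" by (rule poly_roots_finite)
    have "range (\<lambda>n::nat. c * of_nat n) \<subseteq> {x. poly p x = 0}" using h ev by auto
    then have "finite (range (\<lambda>n::nat. c * of_nat n))" using fin finite_subset by blast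
    moreover have "inj (\<lambda>n::nat. c * of_nat n)" using c by (auto simp: inj_def)
    ultimately show False using finite_imageD infinite_UNIV_nat by blast
  qed
  have "coeff p i = b i" unfolding p_def using i by (simp add: coeff_sum coeff_monom)
  then show "b i = 0" using \<open>p = 0\<close> by simp
qed

lemma evalC_zero:
  fixes c :: complex
  assumes c: "c \<noteq> 0" and hP: "h \<in> Pd L"
    and z: "\<And>k l. evalC L h (c * of_nat k, c * of_nat l) = 0"
  shows "h = 0"
proof -
  have box: "evalC L h x = (\<Sum>j\<le>L. (\<Sum>i\<le>L. h (i, j) * fst x ^ i) * snd x ^ j)" for x
  proof -
    have "evalC L h x = (\<Sum>a\<in>{..L} \<times> {..L}. h a * fst x ^ fst a * snd x ^ snd a)"
      unfolding evalC_def
      by (rule sum.mono_neutral_left) (use hP in \<open>auto simp: Td_def Pd_def\<close>)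
    also have "\<dots> = (\<Sum>i\<le>L. \<Sum>j\<le>L. h (i, j) * fst x ^ i * snd x ^ j)"
      by (subst sum.cartesian_product) (simp add: case_prod_beta')
    also have "\<dots> = (\<Sum>j\<le>L. \<Sum>i\<le>L. h (i, j) * fst x ^ i * snd x ^ j)"
      by (rule sum.swap)
    also have "\<dots> = (\<Sum>j\<le>L. (\<Sum>i\<le>L. h (i, j) * fst x ^ i) * snd x ^ j)"
      by (simp add: sum_distrib_right)
    finally show ?thesis .
  qed
  have inner: "(\<Sum>i\<le>L. h (i, j) * (c * of_nat k) ^ i) = 0" if j: "j \<le> L" for j k
    using univ_zero[OF c _ j, of "\<lambda>j. \<Sum>i\<le>L. h (i, j) * (c * of_nat k) ^ i"] z box by simp
  have "h a = 0" for a
  proof (cases "fst a \<le> L \<and> snd a \<le> L")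
    case True
    then have "h (fst a, snd a) = 0"
      using univ_zero[OF c _, of "\<lambda>i. h (i, snd a)" L "fst a"] inner[of "snd a"] by simp
    then show ?thesis by simp
  next
    case False
    then have "L < fst a + snd a" by auto
    then show ?thesis using hP unfolding Pd_def by (cases a) auto
  qed
  then show ?thesis by (simp add: fun_eq_iff)
qed


lemma unisolvent:
  fixes c :: complex
  assumes c: "c \<noteq> 0" and hP: "h \<in> Pd L"
    and z: "\<And>k l. k + l \<le> L \<Longrightarrow> evalC L h (c * of_nat k, c * of_nat l) = 0"
  shows "h = 0"
proof (rule evalC_zero[OF c hP])
  fix k l
  have "evalC L h (0 + (c * of_nat k, c * of_nat l)) = 0"
    by (rule PC_grid[OF PC_evalC]) (use z in simp)
  then show "evalC L h (c * of_nat k, c * of_nat l) = 0" by simp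
qed

lemma iter_pd_append: "iter_pd (xs @ ys) f = iter_pd xs (iter_pd ys f)"
  by (induction xs) auto

lemma pd1_pow: "(pd1 ^^ n) f = iter_pd (replicate n True) f"
  by (induction n) auto

lemma pd2_pow: "(pd2 ^^ n) f = iter_pd (replicate n False) f"
  by (induction n) auto

lemma pdiff_iter: "pdiff a f = iter_pd (replicate (fst a) True @ replicate (snd a) False) f"
  unfolding pdiff_def iter_pd_append pd1_pow pd2_pow ..

definition diffall :: "(real \<times> real \<Rightarrow> complex) \<Rightarrow> bool" where
  "diffall G \<longleftrightarrow> (\<forall>p. G differentiable (at p))"

lemma smooth_diffall: "smooth2 psi \<Longrightarrow> diffall (iter_pd ds psi)"
  unfolding smooth2_def diffall_def differentiable_on_def by simp

lemma line1:
  assumes "G differentiable (at p)"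
  shows "((\<lambda>s. G (s, snd p)) has_vector_derivative pd1 G p) (at (fst p))"
proof -
  have "(\<lambda>s. (s, snd p)) differentiable (at (fst p))"
    by (auto intro!: derivative_intros simp: differentiable_def)
  moreover have "G differentiable (at ((\<lambda>s. (s, snd p)) (fst p)))" using assms by simp
  ultimately have "(G \<circ> (\<lambda>s. (s, snd p))) differentiable (at (fst p))" by (rule differentiable_chain_at)
  then have "(\<lambda>s. G (s, snd p)) differentiable (at (fst p))" by (simp add: o_def)
  then show ?thesis unfolding pd1_def vector_derivative_works .
qed

lemma line2:
  assumes "G differentiable (at p)"
  shows "((\<lambda>s. G (fst p, s)) has_vector_derivative pd2 G p) (at (snd p))"
proof -
  have "(\<lambda>s. (fst p, s)) differentiable (at (snd p))"
    by (auto intro!: derivative_intros simp: differentiable_def)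
  moreover have "G differentiable (at ((\<lambda>s. (fst p, s)) (snd p)))" using assms by simp
  ultimately have "(G \<circ> (\<lambda>s. (fst p, s))) differentiable (at (snd p))" by (rule differentiable_chain_at)
  then have "(\<lambda>s. G (fst p, s)) differentiable (at (snd p))" by (simp add: o_def)
  then show ?thesis unfolding pd2_def vector_derivative_works .
qed

lemma pd1_refl:
  assumes "diffall G"
  shows "pd1 (\<lambda>x. c * G (y - x)) x = - c * pd1 G (y - x)"
proof -
  let ?q = "y - x"
  have D: "((\<lambda>s. G (s, snd ?q)) has_vector_derivative pd1 G ?q) (at (fst ?q))"
    using line1 assms unfolding diffall_def by blast
  have f: "((\<lambda>t. fst y - t) has_vector_derivative (-1)) (at (fst x))"
    by (auto intro!: derivative_eq_intros simp: has_real_derivative_iff_has_vector_derivative[symmetric])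
  have "(((\<lambda>s. G (s, snd ?q)) \<circ> (\<lambda>t. fst y - t)) has_vector_derivative ((-1) *\<^sub>R pd1 G ?q)) (at (fst x))"
    by (rule vector_diff_chain_at[OF f]) (use D in simp)
  then have "((\<lambda>t. G (fst y - t, snd y - snd x)) has_vector_derivative ((-1) *\<^sub>R pd1 G ?q)) (at (fst x))"
    by (simp add: o_def)
  then have "((\<lambda>t. c * G (fst y - t, snd y - snd x)) has_vector_derivative c * ((-1) *\<^sub>R pd1 G ?q)) (at (fst x))"
    by (rule has_vector_derivative_mult_right)
  moreover have "(\<lambda>t. c * G (y - (t, snd x))) = (\<lambda>t. c * G (fst y - t, snd y - snd x))"
    by (rule ext) (simp add: minus_prod_def)
  ultimately have "((\<lambda>t. c * G (y - (t, snd x))) has_vector_derivative c * ((-1) *\<^sub>R pd1 G ?q)) (at (fst x))"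
    by simp
  then show ?thesis unfolding pd1_def by (simp add: vector_derivative_at)
qed

lemma pd2_refl:
  assumes "diffall G"
  shows "pd2 (\<lambda>x. c * G (y - x)) x = - c * pd2 G (y - x)"
proof -
  let ?q = "y - x"
  have D: "((\<lambda>s. G (fst ?q, s)) has_vector_derivative pd2 G ?q) (at (snd ?q))"
    using line2 assms unfolding diffall_def by blast
  have f: "((\<lambda>t. snd y - t) has_vector_derivative (-1)) (at (snd x))"
    by (auto intro!: derivative_eq_intros simp: has_real_derivative_iff_has_vector_derivative[symmetric])
  have "(((\<lambda>s. G (fst ?q, s)) \<circ> (\<lambda>t. snd y - t)) has_vector_derivative ((-1) *\<^sub>R pd2 G ?q)) (at (snd x))"
    by (rule vector_diff_chain_at[OF f]) (use D in simp)
  then have "((\<lambda>t. G (fst y - fst x, snd y - t)) has_vector_derivative ((-1) *\<^sub>R pd2 G ?q)) (at (snd x))"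
    by (simp add: o_def)
  then have "((\<lambda>t. c * G (fst y - fst x, snd y - t)) has_vector_derivative c * ((-1) *\<^sub>R pd2 G ?q)) (at (snd x))"
    by (rule has_vector_derivative_mult_right)
  moreover have "(\<lambda>t. c * G (y - (fst x, t))) = (\<lambda>t. c * G (fst y - fst x, snd y - t))"
    by (rule ext) (simp add: minus_prod_def)
  ultimately have "((\<lambda>t. c * G (y - (fst x, t))) has_vector_derivative c * ((-1) *\<^sub>R pd2 G ?q)) (at (snd x))"
    by simp
  then show ?thesis unfolding pd2_def by (simp add: vector_derivative_at)
qed

lemma iter_refl:
  assumes "smooth2 psi"
  shows "iter_pd ds (\<lambda>x. psi (y - x)) = (\<lambda>x. (-1) ^ length ds * iter_pd ds psi (y - x))"
proof (induction ds)
  case Nil then show ?case by simp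
next
  case (Cons d ds)
  have da: "diffall (iter_pd ds psi)" by (rule smooth_diffall[OF assms])
  show ?case
  proof (cases d)
    case True
    then show ?thesis by (simp add: Cons.IH pd1_refl[OF da])
  next
    case False
    then show ?thesis by (simp add: Cons.IH pd2_refl[OF da])
  qed
qed

lemma pdiff_refl:
  assumes "smooth2 psi"
  shows "pdiff a (\<lambda>x. psi (y - x)) (0, 0) = (-1) ^ (fst a + snd a) * pdiff a psi y"
  unfolding pdiff_iter iter_refl[OF assms] by (simp add: zero_prod_def[symmetric])

lemma periodic_pd1:
  assumes per: "periodic2 G" and d: "diffall G"
  shows "periodic2 (pd1 G)"
  unfolding periodic2_def
proof (intro allI)
  fix x :: "real \<times> real" and k1 k2 :: int
  let ?k = "(real_of_int k1, real_of_int k2)"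
  have eq: "(\<lambda>t. G (t, snd (x + ?k))) = (\<lambda>t. G (t, snd x)) \<circ> (\<lambda>t. t - real_of_int k1)"
  proof
    fix t
    have "G (t, snd (x + ?k)) = G ((t - real_of_int k1, snd x) + ?k)" by simp
    also have "\<dots> = G (t - real_of_int k1, snd x)" using per unfolding periodic2_def by blast
    finally show "G (t, snd (x + ?k)) = ((\<lambda>t. G (t, snd x)) \<circ> (\<lambda>t. t - real_of_int k1)) t" by simp
  qed
  have f: "((\<lambda>t. t - real_of_int k1) has_vector_derivative 1) (at (fst (x + ?k)))"
    by (auto intro!: derivative_eq_intros simp: has_real_derivative_iff_has_vector_derivative[symmetric])
  have D: "((\<lambda>t. G (t, snd x)) has_vector_derivative pd1 G x) (at ((\<lambda>t. t - real_of_int k1) (fst (x + ?k))))"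
    using line1[of G x] d unfolding diffall_def by simp
  have "((\<lambda>t. G (t, snd (x + ?k))) has_vector_derivative (1 *\<^sub>R pd1 G x)) (at (fst (x + ?k)))"
    unfolding eq by (rule vector_diff_chain_at[OF f D])
  then show "pd1 G (x + ?k) = pd1 G x" unfolding pd1_def[of G "x + ?k"] by (simp add: vector_derivative_at)
qed

lemma periodic_pd2:
  assumes per: "periodic2 G" and d: "diffall G"
  shows "periodic2 (pd2 G)"
  unfolding periodic2_def
proof (intro allI)
  fix x :: "real \<times> real" and k1 k2 :: int
  let ?k = "(real_of_int k1, real_of_int k2)"
  have eq: "(\<lambda>t. G (fst (x + ?k), t)) = (\<lambda>t. G (fst x, t)) \<circ> (\<lambda>t. t - real_of_int k2)"
  proof
    fix t
    have "G (fst (x + ?k), t) = G ((fst x, t - real_of_int k2) + ?k)" by simp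
    also have "\<dots> = G (fst x, t - real_of_int k2)" using per unfolding periodic2_def by blast
    finally show "G (fst (x + ?k), t) = ((\<lambda>t. G (fst x, t)) \<circ> (\<lambda>t. t - real_of_int k2)) t" by simp
  qed
  have f: "((\<lambda>t. t - real_of_int k2) has_vector_derivative 1) (at (snd (x + ?k)))"
    by (auto intro!: derivative_eq_intros simp: has_real_derivative_iff_has_vector_derivative[symmetric])
  have D: "((\<lambda>t. G (fst x, t)) has_vector_derivative pd2 G x) (at ((\<lambda>t. t - real_of_int k2) (snd (x + ?k))))"
    using line2[of G x] d unfolding diffall_def by simp
  have "((\<lambda>t. G (fst (x + ?k), t)) has_vector_derivative (1 *\<^sub>R pd2 G x)) (at (snd (x + ?k)))"
    unfolding eq by (rule vector_diff_chain_at[OF f D])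
  then show "pd2 G (x + ?k) = pd2 G x" unfolding pd2_def[of G "x + ?k"] by (simp add: vector_derivative_at)
qed

lemma periodic_iter:
  assumes "smooth2 psi" "periodic2 psi"
  shows "periodic2 (iter_pd ds psi)"
proof (induction ds)
  case Nil then show ?case using assms by simp
next
  case (Cons d ds)
  then show ?case using periodic_pd1 periodic_pd2 smooth_diffall[OF assms(1)] by simp
qed

lemma exp_lin_deriv:
  "((\<lambda>s::real. exp (A + B * complex_of_real s)) has_vector_derivative (B * exp (A + B * complex_of_real s))) (at s)"
proof -
  have "((\<lambda>w. exp (A + B * w)) has_field_derivative (exp (A + B * complex_of_real s) * B)) (at (complex_of_real s))"
    by (auto intro!: derivative_eq_intros)
  from has_vector_derivative_real_field[OF this] show ?thesis by (simp add: mult.commute)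
qed

lemma byparts1:
  fixes f f' :: "real \<Rightarrow> complex"
  assumes f: "\<And>s. (f has_vector_derivative f' s) (at s)"
    and cf': "continuous_on {0..1} f'"
    and per: "f 1 = f 0" and eB: "exp B = 1"
  shows "integral {0..1} (\<lambda>s. f' s * exp (A + B * of_real s)) =
         - B * integral {0..1} (\<lambda>s. f s * exp (A + B * of_real s))"
proof -
  define g where "g s = exp (A + B * complex_of_real s)" for s
  have cf: "continuous_on {0..1} f"
    using f by (intro continuous_at_imp_continuous_on ballI has_vector_derivative_continuous) auto
  have cg: "continuous_on {0..1} g" unfolding g_def by (intro continuous_intros)
  have g: "(g has_vector_derivative B * g s) (at s)" for s unfolding g_def by (rule exp_lin_deriv)
  define I0 where "I0 = integral {0..1} (\<lambda>s. f s * g s)"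
  have int0: "((\<lambda>s. f s * g s) has_integral I0) {0..1}"
    unfolding I0_def by (intro integrable_integral integrable_continuous_real continuous_intros cf cg)
  have "((\<lambda>s. f s * (B * g s)) has_integral (B * I0)) {0..1}"
    using has_integral_mult_right[OF int0, of B] by (simp add: algebra_simps)
  moreover have "g 1 = g 0" unfolding g_def using eB by (simp add: exp_add)
  ultimately have "((\<lambda>s. f s * (B * g s)) has_integral (f 1 * g 1 - f 0 * g 0 - (- B * I0))) {0..1}"
    using per by simp
  then have "((\<lambda>s. f' s * g s) has_integral (- B * I0)) {0..1}"
    using integration_by_parts[OF bounded_bilinear_mult _ cf cg, of f' "\<lambda>s. B * g s" "- B * I0"] f g by simp
  then show ?thesis unfolding g_def I0_def by (rule integral_unique)
qed


definition Ef :: "nat \<times> nat \<Rightarrow> real \<times> real \<Rightarrow> complex" where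
  "Ef a x = exp (- 2 * of_real pi * \<i> * of_real (real (fst a) * fst x + real (snd a) * snd x))"

lemma fourier2_Ef: "fourier2 F a = integral (cbox (0, 0) (1, 1)) (\<lambda>x. F x * Ef a x)"
  unfolding fourier2_def Ef_def ..

lemma cont_Ef: "continuous_on S (Ef a)"
  unfolding Ef_def by (intro continuous_intros)

lemma exp_nat_2pi: "exp (- 2 * complex_of_real pi * \<i> * complex_of_real (real n)) = 1"
proof -
  have "- 2 * complex_of_real pi * \<i> * complex_of_real (real n) = \<i> * complex_of_real (2 * pi * (- real n))"
    by simp
  then have "exp (- 2 * complex_of_real pi * \<i> * complex_of_real (real n)) = cis (2 * pi * (- real n))"
    by (simp add: cis_conv_exp mult.commute mult.left_commute)
  also have "\<dots> = 1" by (rule cis_multiple_2pi) simp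
  finally show ?thesis .
qed

lemma Ef_2: "Ef a (x1, s) = exp ((- 2 * of_real pi * \<i> * of_real (real (fst a) * x1)) + (- 2 * of_real pi * \<i> * of_real (real (snd a))) * of_real s)"
  unfolding Ef_def by (simp add: algebra_simps)

lemma Ef_1: "Ef a (s, x2) = exp ((- 2 * of_real pi * \<i> * of_real (real (snd a) * x2)) + (- 2 * of_real pi * \<i> * of_real (real (fst a))) * of_real s)"
  unfolding Ef_def by (simp add: algebra_simps)

lemma diffall_cont: "diffall G \<Longrightarrow> continuous_on S G"
  unfolding diffall_def
  by (intro continuous_at_imp_continuous_on ballI differentiable_imp_continuous_within) auto

lemma fourier_pd2:
  assumes dG: "diffall G" and dG2: "diffall (pd2 G)" and per: "periodic2 G"
  shows "fourier2 (pd2 G) a = 2 * complex_of_real pi * \<i> * of_nat (snd a) * fourier2 G a"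
proof -
  let ?B = "- 2 * complex_of_real pi * \<i> * of_real (real (snd a))"
  have cG: "continuous_on S G" for S using diffall_cont[OF dG] .
  have cG2: "continuous_on S (pd2 G)" for S using diffall_cont[OF dG2] .
  have inner: "integral (cbox 0 1) (\<lambda>s. pd2 G (x1, s) * Ef a (x1, s)) =
      - ?B * integral (cbox 0 1) (\<lambda>s. G (x1, s) * Ef a (x1, s))" for x1
    unfolding cbox_interval Ef_2
  proof (rule byparts1)
    show "((\<lambda>s. G (x1, s)) has_vector_derivative pd2 G (x1, s)) (at s)" for s
      using line2[of G "(x1, s)"] dG unfolding diffall_def by simp
    show "continuous_on {0..1} (\<lambda>s. pd2 G (x1, s))"
      by (rule continuous_on_compose2[OF cG2[of UNIV]]) (auto intro!: continuous_intros)
    show "G (x1, 1) = G (x1, 0)"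
    proof -
      have "G ((x1, 0) + (real_of_int 0, real_of_int 1)) = G (x1, 0)" using per unfolding periodic2_def by blast
      then show ?thesis by simp
    qed
    show "exp ?B = 1" by (rule exp_nat_2pi)
  qed
  have "fourier2 (pd2 G) a = integral (cbox 0 1) (\<lambda>x1. integral (cbox 0 1) (\<lambda>s. pd2 G (x1, s) * Ef a (x1, s)))"
    unfolding fourier2_Ef by (rule integral_prod_continuous) (intro continuous_intros cG2 cont_Ef)
  also have "\<dots> = integral (cbox 0 1) (\<lambda>x1. - ?B * integral (cbox 0 1) (\<lambda>s. G (x1, s) * Ef a (x1, s)))"
    using inner by simp
  also have "\<dots> = - ?B * integral (cbox 0 1) (\<lambda>x1. integral (cbox 0 1) (\<lambda>s. G (x1, s) * Ef a (x1, s)))"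
    by (rule integral_mult_right)
  also have "integral (cbox 0 1) (\<lambda>x1. integral (cbox 0 1) (\<lambda>s. G (x1, s) * Ef a (x1, s))) = fourier2 G a"
    unfolding fourier2_Ef by (rule integral_prod_continuous[symmetric]) (intro continuous_intros cG cont_Ef)
  finally show ?thesis by simp
qed


lemma swap_int:
  assumes "continuous_on UNIV F"
  shows "integral (cbox (0, 0) (1, 1)) (\<lambda>x. F x * Ef a x) =
    integral (cbox 0 1) (\<lambda>x2. integral (cbox 0 1) (\<lambda>x1. F (x1, x2) * Ef a (x1, x2)))"
proof -
  have c: "continuous_on (cbox (0, 0) (1, 1)) (\<lambda>x. F x * Ef a x)"
    by (intro continuous_intros continuous_on_subset[OF assms] cont_Ef) auto
  have "integral (cbox (0, 0) (1, 1)) (\<lambda>x. F x * Ef a x) =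
    integral (cbox 0 1) (\<lambda>x1. integral (cbox 0 1) (\<lambda>x2. F (x1, x2) * Ef a (x1, x2)))"
    by (rule integral_prod_continuous[OF c])
  also have "\<dots> = integral (cbox 0 1) (\<lambda>x2. integral (cbox 0 1) (\<lambda>x1. F (x1, x2) * Ef a (x1, x2)))"
    by (rule integral_swap_continuous) (use c in \<open>simp add: case_prod_beta'\<close>)
  finally show ?thesis .
qed

lemma fourier_pd1:
  assumes dG: "diffall G" and dG1: "diffall (pd1 G)" and per: "periodic2 G"
  shows "fourier2 (pd1 G) a = 2 * complex_of_real pi * \<i> * of_nat (fst a) * fourier2 G a"
proof -
  let ?B = "- 2 * complex_of_real pi * \<i> * of_real (real (fst a))"
  have cG: "continuous_on S G" for S using diffall_cont[OF dG] .
  have cG1: "continuous_on S (pd1 G)" for S using diffall_cont[OF dG1] .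
  have inner: "integral (cbox 0 1) (\<lambda>s. pd1 G (s, x2) * Ef a (s, x2)) =
      - ?B * integral (cbox 0 1) (\<lambda>s. G (s, x2) * Ef a (s, x2))" for x2
    unfolding cbox_interval Ef_1
  proof (rule byparts1)
    show "((\<lambda>s. G (s, x2)) has_vector_derivative pd1 G (s, x2)) (at s)" for s
      using line1[of G "(s, x2)"] dG unfolding diffall_def by simp
    show "continuous_on {0..1} (\<lambda>s. pd1 G (s, x2))"
      by (rule continuous_on_compose2[OF cG1[of UNIV]]) (auto intro!: continuous_intros)
    show "G (1, x2) = G (0, x2)"
    proof -
      have "G ((0, x2) + (real_of_int 1, real_of_int 0)) = G (0, x2)" using per unfolding periodic2_def by blast
      then show ?thesis by simp
    qed
    show "exp ?B = 1" by (rule exp_nat_2pi)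
  qed
  have "fourier2 (pd1 G) a = integral (cbox 0 1) (\<lambda>x2. integral (cbox 0 1) (\<lambda>s. pd1 G (s, x2) * Ef a (s, x2)))"
    unfolding fourier2_Ef by (rule swap_int[OF cG1])
  also have "\<dots> = integral (cbox 0 1) (\<lambda>x2. - ?B * integral (cbox 0 1) (\<lambda>s. G (s, x2) * Ef a (s, x2)))"
    using inner by simp
  also have "\<dots> = - ?B * integral (cbox 0 1) (\<lambda>x2. integral (cbox 0 1) (\<lambda>s. G (s, x2) * Ef a (s, x2)))"
    by (rule integral_mult_right)
  also have "integral (cbox 0 1) (\<lambda>x2. integral (cbox 0 1) (\<lambda>s. G (s, x2) * Ef a (s, x2))) = fourier2 G a"
    unfolding fourier2_Ef by (rule swap_int[OF cG, symmetric])
  finally show ?thesis by simp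
qed

lemma fourier_rep:
  assumes sm: "smooth2 psi" and per: "periodic2 psi"
  shows "fourier2 (iter_pd (replicate m True @ replicate n False) psi) a =
     (2 * complex_of_real pi * \<i> * of_nat (fst a)) ^ m * (2 * complex_of_real pi * \<i> * of_nat (snd a)) ^ n * fourier2 psi a"
proof (induction m)
  case 0
  show ?case
  proof (induction n)
    case 0 then show ?case by simp
  next
    case (Suc n)
    let ?G = "iter_pd (replicate n False) psi"
    have "fourier2 (pd2 ?G) a = 2 * complex_of_real pi * \<i> * of_nat (snd a) * fourier2 ?G a"
      by (rule fourier_pd2[OF smooth_diffall[OF sm] _ periodic_iter[OF sm per]])
         (use smooth_diffall[OF sm, of "False # replicate n False"] in simp)
    then show ?case using Suc by simp
  qed
next
  case (Suc m)
  let ?G = "iter_pd (replicate m True @ replicate n False) psi"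
  have "fourier2 (pd1 ?G) a = 2 * complex_of_real pi * \<i> * of_nat (fst a) * fourier2 ?G a"
    by (rule fourier_pd1[OF smooth_diffall[OF sm] _ periodic_iter[OF sm per]])
       (use smooth_diffall[OF sm, of "True # replicate m True @ replicate n False"] in simp)
  then show ?case using Suc by simp
qed

lemma fourier_pdiff:
  assumes sm: "smooth2 psi" and per: "periodic2 psi"
  shows "fourier2 (pdiff b psi) a =
     (2 * complex_of_real pi * \<i> * of_nat (fst a)) ^ fst b * (2 * complex_of_real pi * \<i> * of_nat (snd a)) ^ snd b * fourier2 psi a"
  unfolding pdiff_iter by (rule fourier_rep[OF sm per])

lemma fourier_lin:
  assumes fin: "finite A" and c: "\<And>b. b \<in> A \<Longrightarrow> continuous_on UNIV (F b)"
  shows "fourier2 (\<lambda>y. \<Sum>b\<in>A. k b * F b y) a = (\<Sum>b\<in>A. k b * fourier2 (F b) a)"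
proof -
  have int: "(\<lambda>x. F b x * Ef a x) integrable_on cbox (0, 0) (1, 1)" if "b \<in> A" for b
    by (intro integrable_continuous continuous_intros continuous_on_subset[OF c[OF that]] cont_Ef) auto
  have "fourier2 (\<lambda>y. \<Sum>b\<in>A. k b * F b y) a = integral (cbox (0, 0) (1, 1)) (\<lambda>x. \<Sum>b\<in>A. k b * (F b x * Ef a x))"
    unfolding fourier2_Ef by (simp add: sum_distrib_right mult.assoc)
  also have "\<dots> = (\<Sum>b\<in>A. integral (cbox (0, 0) (1, 1)) (\<lambda>x. k b * (F b x * Ef a x)))"
    by (rule integral_sum[OF fin]) (use int in \<open>auto intro: integrable_on_cmult_left integrable_on_mult_right\<close>)
  also have "\<dots> = (\<Sum>b\<in>A. k b * fourier2 (F b) a)"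
    unfolding fourier2_Ef by (simp add: integral_mult_right)
  finally show ?thesis .
qed

definition Th :: "nat \<Rightarrow> (real \<times> real \<Rightarrow> complex) \<Rightarrow> coeffs2 \<Rightarrow> real \<times> real \<Rightarrow> complex" where
  "Th L psi h = (\<lambda>y. \<Sum>b\<in>Td L. h b * pdiff b (\<lambda>x. psi (y - x)) (0, 0))"

lemma Th_linear: "Vector_Spaces.linear cscale cscale (Th L psi)"
  unfolding Vector_Spaces.linear_iff
  by (auto simp: cs.vector_space_axioms Th_def cscale_def fun_eq_iff sum.distrib sum_distrib_left algebra_simps)

lemma Th_alt:
  assumes sm: "smooth2 psi"
  shows "Th L psi h = (\<lambda>y. \<Sum>b\<in>Td L. (h b * (-1) ^ (fst b + snd b)) * pdiff b psi y)"
  unfolding Th_def pdiff_refl[OF sm] by (simp add: algebra_simps)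

lemma Th_inj:
  assumes sm: "smooth2 psi" and per: "periodic2 psi"
    and fz: "\<forall>a. fst a + snd a \<le> L \<longrightarrow> fourier2 psi a \<noteq> 0"
    and hP: "h \<in> Pd L" and z: "Th L psi h = 0"
  shows "h = 0"
proof -
  let ?c = "- 2 * complex_of_real pi * \<i>"
  have c: "?c \<noteq> 0" by simp
  have cont: "continuous_on UNIV (pdiff b psi)" for b
    unfolding pdiff_iter by (rule diffall_cont[OF smooth_diffall[OF sm]])
  show ?thesis
  proof (rule unisolvent[OF c hP])
    fix k l assume kl: "k + l \<le> L"
    let ?a = "(k, l)"
    have "fourier2 (Th L psi h) ?a = (\<Sum>b\<in>Td L. (h b * (-1) ^ (fst b + snd b)) * fourier2 (pdiff b psi) ?a)"
      unfolding Th_alt[OF sm] by (rule fourier_lin[OF finite_Td cont])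
    also have "\<dots> = fourier2 psi ?a * evalC L h (?c * of_nat k, ?c * of_nat l)"
      unfolding evalC_def fourier_pdiff[OF sm per] sum_distrib_left
      by (rule sum.cong) (simp_all add: power_mult_distrib power_minus[of "_ * _"] power_add algebra_simps)
    finally have eq: "fourier2 (Th L psi h) ?a = fourier2 psi ?a * evalC L h (?c * of_nat k, ?c * of_nat l)" .
    have "fourier2 (Th L psi h) ?a = 0" unfolding z fourier2_def by simp
    moreover have "fourier2 psi ?a \<noteq> 0" using fz kl by simp
    ultimately show "evalC L h (?c * of_nat k, ?c * of_nat l) = 0" using eq by simp
  qed
qed

theorem mainTheorem3:
  fixes psi :: "real \<times> real \<Rightarrow> complex"
    and z :: "nat \<Rightarrow> real \<times> real"
    and N :: nat
  assumes "smooth2 psi"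
    and "periodic2 psi"
    and "\<forall>i<N. z i \<in> {0..<1} \<times> {0..<1}"
    and "inj_on z {..<N}"
    and "\<forall>a. fst a + snd a \<le> least_deg_bound z N \<longrightarrow> fourier2 psi a \<noteq> 0"
  shows "Vector_Spaces.vector_space.dim cscale
           {(\<lambda>y. diff_op h (\<lambda>x. psi (y - x)) (0, 0)) | h. h \<in> least_space z N} = 3 * N
       \<and> least_deg_bound z N \<le> 2 * N - 1"
proof -
  note sm = assms(1) and per = assms(2) and inj = assms(4) and fz = assms(5)
  define L where "L = least_deg_bound z N"
  define S where "S = least_space z N"
  have LK: "L \<le> 2 * N - 1" unfolding L_def using L_facts(1)[OF inj] .
  have SP: "S \<subseteq> Pd L" unfolding L_def S_def using L_facts(2)[OF inj] .
  have dimS: "cs.dim S = 3 * N" unfolding S_def using dim_least[OF inj] .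
  have subS: "cs.subspace S" unfolding S_def least_space_def by simp
  have spanS: "cs.span S = S" using subS by simp
  have dop: "diff_op h f x = (\<Sum>b\<in>Td L. h b * pdiff b f x)" if h: "h \<in> Pd L" for h f x
    unfolding diff_op_def
  proof (rule sum.mono_neutral_left[OF finite_Td])
    show "{a. h a \<noteq> 0} \<subseteq> Td L" using h unfolding Pd_def Td_def by (auto simp: not_le[symmetric]) (metis not_le)
    show "\<forall>i\<in>Td L - {a. h a \<noteq> 0}. h i * pdiff i f x = 0" by simp
  qed
  have seteq: "{(\<lambda>y. diff_op h (\<lambda>x. psi (y - x)) (0, 0)) | h. h \<in> S} = Th L psi ` S"
  proof -
    have "(\<lambda>y. diff_op h (\<lambda>x. psi (y - x)) (0, 0)) = Th L psi h" if "h \<in> S" for h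
      using dop[of h] that SP unfolding Th_def by (auto simp: fun_eq_iff)
    then show ?thesis by (auto simp: image_def) (metis)
  qed
  interpret lin: Vector_Spaces.linear "cscale :: complex \<Rightarrow> coeffs2 \<Rightarrow> coeffs2"
    "cscale :: complex \<Rightarrow> (real \<times> real \<Rightarrow> complex) \<Rightarrow> _" "Th L psi"
    by (rule Th_linear)
  have injS: "inj_on (Th L psi) (cs.span S)"
    unfolding spanS
  proof (rule inj_onI)
    fix x y assume xy: "x \<in> S" "y \<in> S" "Th L psi x = Th L psi y"
    have "x - y \<in> S" using xy subS cs.subspace_diff by blast
    then have P: "x - y \<in> Pd L" using SP by blast
    have th0: "Th L psi (x - y) = 0" using xy(3) lin.diff by simp
    have fzL: "\<forall>a. fst a + snd a \<le> L \<longrightarrow> fourier2 psi a \<noteq> 0" using fz unfolding L_def .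
    from Th_inj[OF sm per fzL P th0] have "x - y = 0" .
    then show "x = y" by simp
  qed
  interpret vsp: vector_space_pair "cscale :: complex \<Rightarrow> coeffs2 \<Rightarrow> coeffs2"
    "cscale :: complex \<Rightarrow> (real \<times> real \<Rightarrow> complex) \<Rightarrow> _" by unfold_locales
  have "Vector_Spaces.vector_space.dim cscale (Th L psi ` S) = cs.dim S"
    by (rule vsp.dim_image_eq_gen[OF Th_linear injS])
  then show ?thesis using seteq dimS LK unfolding L_def S_def by simp
qed

end
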